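(* Let $\Pi_n$ be the $\Lambda$-coalescent restricted to $\{1,\dots,n\}$ started from $n$ singletons, and $T^n_m=\inf\{t\ge0:\#\Pi_n(t)\le m\}$. Let $(\hat T_i)_{i\ge2}$ be independent random variables with $\hat T_i$ distributed as $T^i_{i-1}$. Then for any $n>m$ and any $t>0$, $$\mathbb{P}(T^n_m\ge t)\le\mathbb{P}\Big(\sum_{i=m+1}^n\hat T_i\ge t\Big).$$
   Context: $\Lambda$ is a finite measure on $[0,1]$, $\lambda_{b,k}=\int_{[0,1]}x^{k-2}(1-x)^{b-k}\Lambda(dx)$ for $2\le k\le b$. The $\Lambda$-coalescent restricted to $\{1,\dots,n\}$ is the Markov chain on partitions of $\{1,\dots,n\}$ in which, when there are $b$ blocks, each $k$-tuple of blocks ($2\le k\le b$) independently merges into a single block at rate $\lambda_{b,k}$; $\#\Pi_n(t)$ is its number of blocks, and $\inf\emptyset=\infty$. *)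

theory Defs
  imports "HOL-Probability.Probability"
begin

definition lambda_measure :: "real measure \<Rightarrow> bool" where
  "lambda_measure \<Lambda> \<longleftrightarrow> finite_measure \<Lambda> \<and> sets \<Lambda> = sets borel
      \<and> emeasure \<Lambda> (- {0..1}) = 0"

text \<open>lambda_{b,k} = integral of x^(k-2) (1-x)^(b-k) against Lambda (0^0 = 1).\<close>
definition lam :: "real measure \<Rightarrow> nat \<Rightarrow> nat \<Rightarrow> real" where
  "lam \<Lambda> b k = (\<integral>x. x ^ (k - 2) * (1 - x) ^ (b - k) \<partial>\<Lambda>)"

definition partitions_of :: "nat \<Rightarrow> nat set set set" where
  "partitions_of n = {P. partition_on {1..n} P}"

definition singletons :: "nat \<Rightarrow> nat set set" where
  "singletons n = {{j} | j. j \<in> {1..n}}"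

definition merge :: "nat set set \<Rightarrow> nat set set \<Rightarrow> nat set set" where
  "merge P K = insert (\<Union>K) (P - K)"

text \<open>Generator (Q-matrix) of the Lambda-coalescent: each k-tuple K of the b
  blocks of P (2 \<le> k \<le> b) merges at rate lambda_{b,k}; diagonal entries are
  minus the total jump rate.\<close>
definition coal_gen :: "real measure \<Rightarrow> nat set set \<Rightarrow> nat set set \<Rightarrow> real" where
  "coal_gen \<Lambda> P P' =
     (\<Sum>K\<in>{K. K \<subseteq> P \<and> 2 \<le> card K \<and> merge P K = P'}. lam \<Lambda> (card P) (card K))
     - (if P = P' then (\<Sum>K\<in>{K. K \<subseteq> P \<and> 2 \<le> card K}. lam \<Lambda> (card P) (card K)) else 0)"

fun Qpow :: "'s set \<Rightarrow> ('s \<Rightarrow> 's \<Rightarrow> real) \<Rightarrow> nat \<Rightarrow> 's \<Rightarrow> 's \<Rightarrow> real" where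
  "Qpow S Q 0 x y = (if x = y then 1 else 0)"
| "Qpow S Q (Suc k) x y = (\<Sum>z\<in>S. Q x z * Qpow S Q k z y)"

definition trans_fun :: "'s set \<Rightarrow> ('s \<Rightarrow> 's \<Rightarrow> real) \<Rightarrow> real \<Rightarrow> 's \<Rightarrow> 's \<Rightarrow> real" where
  "trans_fun S Q t x y = (\<Sum>k. t ^ k / fact k * Qpow S Q k x y)"

text \<open>X is (a version of) the Lambda-coalescent restricted to {1..n}, started
  from n singletons, on the probability space M: measurable marginals,
  right-continuous piecewise constant paths, and finite-dimensional
  distributions those of the continuous-time Markov chain with generator
  coal_gen started at the singleton partition.\<close>
definition is_coalescent ::
  "real measure \<Rightarrow> nat \<Rightarrow> 'a measure \<Rightarrow> (real \<Rightarrow> 'a \<Rightarrow> nat set set) \<Rightarrow> bool" where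
  "is_coalescent \<Lambda> n M X \<longleftrightarrow>
     (\<forall>t. X t \<in> measurable M (count_space UNIV)) \<and>
     (\<forall>\<omega>\<in>space M. \<forall>t\<ge>0. \<exists>e>0. \<forall>s. t \<le> s \<and> s < t + e \<longrightarrow> X s \<omega> = X t \<omega>) \<and>
     (\<forall>ts xs. sorted ts \<and> (\<forall>s\<in>set ts. 0 \<le> s) \<and> length xs = length ts \<longrightarrow>
        measure M {\<omega>\<in>space M. \<forall>i<length ts. X (ts ! i) \<omega> = xs ! i}
        = (\<Prod>i<length ts.
             trans_fun (partitions_of n) (coal_gen \<Lambda>)
               (ts ! i - (if i = 0 then 0 else ts ! (i - 1)))
               (if i = 0 then singletons n else xs ! (i - 1)) (xs ! i)))"

text \<open>T_m = inf {t \<ge> 0. #X(t) \<le> m}, with inf of the empty set = \<infinity>.\<close>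
definition hitting_time :: "(real \<Rightarrow> 'a \<Rightarrow> nat set set) \<Rightarrow> nat \<Rightarrow> 'a \<Rightarrow> ereal" where
  "hitting_time X m \<omega> = Inf ((\<lambda>s. ereal s) ` {s. 0 \<le> s \<and> card (X s \<omega>) \<le> m})"

end

theory Submission
  imports Defs
begin


definition rate :: "real measure \<Rightarrow> nat set set \<Rightarrow> real" where
  "rate \<Lambda> P = (\<Sum>K\<in>{K. K \<subseteq> P \<and> 2 \<le> card K}. lam \<Lambda> (card P) (card K))"

lemma lam_nonneg:
  assumes "lambda_measure \<Lambda>" shows "0 \<le> lam \<Lambda> b k"
proof -
  have sets: "sets \<Lambda> = sets borel" and z: "emeasure \<Lambda> (- {0..1}) = 0"
    using assms by (auto simp: lambda_measure_def)
  have "- {0..1::real} \<in> null_sets \<Lambda>"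
    using z sets by (auto simp: null_sets_def)
  then have "AE x in \<Lambda>. x \<in> {0..1}"
    by (rule AE_I') auto
  then have "AE x in \<Lambda>. 0 \<le> x ^ (k - 2) * (1 - x) ^ (b - k)"
    by eventually_elim auto
  then show ?thesis unfolding lam_def by (rule integral_nonneg_AE)
qed

lemma rate_nonneg: "lambda_measure \<Lambda> \<Longrightarrow> 0 \<le> rate \<Lambda> P"
  unfolding rate_def by (auto intro!: sum_nonneg lam_nonneg)

lemma merge_partition:
  assumes P: "partition_on A P" and K: "K \<subseteq> P" "K \<noteq> {}"
  shows "partition_on A (merge P K)"
proof -
  have U: "\<Union>(merge P K) = A" using partition_onD1[OF P] K unfolding merge_def by blast
  have d: "disjoint P" using partition_onD2[OF P] .
  have e: "{} \<notin> P" using partition_onD3[OF P] .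
  have D: "disjoint (merge P K)"
  proof (rule disjointI)
    fix a b assume a: "a \<in> merge P K" and b: "b \<in> merge P K" and ab: "a \<noteq> b"
    have cross: "\<Union>K \<inter> c = {}" if c: "c \<in> P - K" for c
    proof -
      have "C \<inter> c = {}" if "C \<in> K" for C
        using disjointD[OF d, of C c] that c K by auto
      then show ?thesis by blast
    qed
    show "a \<inter> b = {}"
    proof (cases "a = \<Union>K")
      case True
      then have "b \<in> P - K" using b ab unfolding merge_def by auto
      then show ?thesis using cross True by auto
    next
      case False
      then have a': "a \<in> P - K" using a unfolding merge_def by auto
      show ?thesis
      proof (cases "b = \<Union>K")
        case True then show ?thesis using cross[OF a'] by auto
      next
        case False
        then have "b \<in> P - K" using b unfolding merge_def by auto
        then show ?thesis using disjointD[OF d, of a b] a' ab by auto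
      qed
    qed
  qed
  obtain C where C: "C \<in> K" using K by auto
  then have "C \<noteq> {}" using e K by auto
  then have "\<Union>K \<noteq> {}" using C by auto
  then have "{} \<notin> merge P K" using e unfolding merge_def by auto
  then show ?thesis using U D unfolding partition_on_def by simp
qed

lemma union_notin:
  assumes "partition_on A P" "K \<subseteq> P" "2 \<le> card K"
  shows "\<Union>K \<notin> P - K"
proof
  assume a: "\<Union>K \<in> P - K"
  from assms(3) have "K \<noteq> {}" by auto
  then obtain C where C: "C \<in> K" by auto
  have "C \<noteq> {}" using assms C unfolding partition_on_def by auto
  have "C \<subseteq> \<Union>K" using C by auto
  moreover have "C \<noteq> \<Union>K" using C a by auto
  moreover have "disjnt C (\<Union>K)"
  proof -
    have "C \<in> P" "\<Union>K \<in> P" using C a assms(2) by auto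
    moreover have "C \<noteq> \<Union>K" using C a by auto
    ultimately have "C \<inter> \<Union>K = {}" using partition_onD2[OF assms(1)] disjointD by blast
    then show ?thesis by (simp add: disjnt_def)
  qed
  ultimately show False using \<open>C \<noteq> {}\<close> by (auto simp: disjnt_def)
qed

lemma merge_card:
  assumes "partition_on A P" "finite P" "K \<subseteq> P" "2 \<le> card K"
  shows "card (merge P K) < card P"
proof -
  have fK: "finite K" using assms finite_subset by blast
  have "card (merge P K) = Suc (card (P - K))"
    unfolding merge_def using union_notin[OF assms(1,3,4)] assms(2) by simp
  also have "\<dots> = Suc (card P - card K)" using card_Diff_subset[OF fK assms(3)] by simp
  also have "\<dots> < card P" using assms(4) card_mono[OF assms(2,3)] by simp
  finally show ?thesis .
qed

lemma finite_partitions: "finite (partitions_of n)"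
  unfolding partitions_of_def by (rule finitely_many_partition_on) simp

lemma partitions_finite: "P \<in> partitions_of n \<Longrightarrow> finite P"
  unfolding partitions_of_def by (auto intro: finite_elements)

lemma singletons_in: "singletons n \<in> partitions_of n"
proof -
  have "singletons n = (\<lambda>x. {x}) ` {1..n}" unfolding singletons_def by auto
  then show ?thesis unfolding partitions_of_def using partition_on_singletons by auto
qed

lemma card_singletons: "card (singletons n) = n"
proof -
  have "singletons n = (\<lambda>x. {x}) ` {1..n}" unfolding singletons_def by auto
  then show ?thesis by (simp add: card_image)
qed

lemma finite_Kset: "finite P \<Longrightarrow> finite {K. K \<subseteq> P \<and> 2 \<le> card K}"
  by (rule finite_subset[of _ "Pow P"]) auto

lemma coal_gen_diag:
  assumes "P \<in> partitions_of n"
  shows "coal_gen \<Lambda> P P = - rate \<Lambda> P"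
proof -
  have pP: "partition_on {1..n} P" using assms unfolding partitions_of_def by simp
  have "{K. K \<subseteq> P \<and> 2 \<le> card K \<and> merge P K = P} = {}"
  proof (rule ccontr)
    assume "{K. K \<subseteq> P \<and> 2 \<le> card K \<and> merge P K = P} \<noteq> {}"
    then obtain K where K: "K \<subseteq> P" "2 \<le> card K" "merge P K = P" by auto
    from merge_card[OF pP partitions_finite[OF assms] K(1,2)] K(3) show False by simp
  qed
  then have e: "(\<Sum>K\<in>{K. K \<subseteq> P \<and> 2 \<le> card K \<and> merge P K = P}. lam \<Lambda> (card P) (card K)) = 0"
    by (simp only: sum.empty)
  show ?thesis unfolding coal_gen_def rate_def e by simp
qed

lemma coal_gen_offdiag_nonneg:
  assumes "lambda_measure \<Lambda>" "P \<noteq> P'"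
  shows "0 \<le> coal_gen \<Lambda> P P'"
  using assms unfolding coal_gen_def by (auto intro!: sum_nonneg lam_nonneg)

lemma coal_gen_offdiag_card:
  assumes "P \<in> partitions_of n" "P \<noteq> P'" "coal_gen \<Lambda> P P' \<noteq> 0"
  shows "card P' < card P"
proof -
  have "(\<Sum>K\<in>{K. K \<subseteq> P \<and> 2 \<le> card K \<and> merge P K = P'}. lam \<Lambda> (card P) (card K)) \<noteq> 0"
    using assms(2,3) unfolding coal_gen_def by simp
  then have "{K. K \<subseteq> P \<and> 2 \<le> card K \<and> merge P K = P'} \<noteq> {}"
    by (metis sum.empty)
  then obtain K where K: "K \<subseteq> P" "2 \<le> card K" "merge P K = P'" by auto
  have "partition_on {1..n} P" using assms(1) unfolding partitions_of_def by simp
  from merge_card[OF this partitions_finite[OF assms(1)] K(1,2)] K(3) show ?thesis by simp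
qed

lemma coal_gen_rowsum:
  assumes "P \<in> partitions_of n"
  shows "(\<Sum>P'\<in>partitions_of n. coal_gen \<Lambda> P P') = 0"
proof -
  let ?S = "partitions_of n"
  let ?K = "{K. K \<subseteq> P \<and> 2 \<le> card K}"
  have fK: "finite ?K" using finite_Kset partitions_finite[OF assms] by blast
  have pP: "partition_on {1..n} P" using assms unfolding partitions_of_def by simp
  have img: "merge P ` ?K \<subseteq> ?S"
  proof
    fix z assume "z \<in> merge P ` ?K"
    then obtain K where K: "K \<subseteq> P" "2 \<le> card K" "z = merge P K" by auto
    then have "K \<noteq> {}" by auto
    from merge_partition[OF pP K(1) this] K(3) show "z \<in> ?S" unfolding partitions_of_def by simp
  qed
  have "(\<Sum>P'\<in>?S. (\<Sum>K\<in>{K. K \<subseteq> P \<and> 2 \<le> card K \<and> merge P K = P'}. lam \<Lambda> (card P) (card K)))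
     = (\<Sum>P'\<in>?S. (\<Sum>K\<in>{K. K \<in> ?K \<and> merge P K = P'}. lam \<Lambda> (card P) (card K)))"
    by (intro sum.cong refl) (auto intro: arg_cong2[where f=sum])
  also have "\<dots> = (\<Sum>K\<in>?K. lam \<Lambda> (card P) (card K))"
    by (rule sum.group[OF fK finite_partitions img])
  finally have 1: "(\<Sum>P'\<in>?S. (\<Sum>K\<in>{K. K \<subseteq> P \<and> 2 \<le> card K \<and> merge P K = P'}. lam \<Lambda> (card P) (card K)))
     = rate \<Lambda> P" unfolding rate_def .
  have 2: "(\<Sum>P'\<in>?S. (if P = P' then (\<Sum>K\<in>?K. lam \<Lambda> (card P) (card K)) else 0)) = rate \<Lambda> P"
    using assms finite_partitions unfolding rate_def by simp
  have "(\<Sum>P'\<in>?S. coal_gen \<Lambda> P P') = (\<Sum>P'\<in>?S. (\<Sum>K\<in>{K. K \<subseteq> P \<and> 2 \<le> card K \<and> merge P K = P'}. lam \<Lambda> (card P) (card K)))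
     - (\<Sum>P'\<in>?S. (if P = P' then (\<Sum>K\<in>?K. lam \<Lambda> (card P) (card K)) else 0))"
    unfolding coal_gen_def by (rule sum_subtractf)
  then show ?thesis using 1 2 by linarith
qed

lemma rate_card:
  assumes "finite P" "finite P'" "card P = card P'"
  shows "rate \<Lambda> P = rate \<Lambda> P'"
proof -
  obtain f where f: "bij_betw f P P'" using finite_same_card_bij[OF assms] by blast
  let ?g = "inv_into P f"
  have g: "bij_betw ?g P' P" using f by (rule bij_betw_inv_into)
  have fi: "inj_on f P" using f by (rule bij_betw_imp_inj_on)
  have gi: "inj_on ?g P'" using g by (rule bij_betw_imp_inj_on)
  show ?thesis unfolding rate_def
  proof (rule sum.reindex_bij_witness[where i="\<lambda>K. ?g ` K" and j="\<lambda>K. f ` K"])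
    fix K assume K: "K \<in> {K. K \<subseteq> P \<and> 2 \<le> card K}"
    then show "?g ` f ` K = K" by (intro inv_into_image_cancel[OF fi]) auto
    have "card (f ` K) = card K" using K card_image[OF inj_on_subset[OF fi]] by auto
    moreover have "f ` K \<subseteq> P'" using K f by (auto simp: bij_betw_def)
    ultimately show "f ` K \<in> {K. K \<subseteq> P' \<and> 2 \<le> card K}" using K by auto
    show "lam \<Lambda> (card P') (card (f ` K)) = lam \<Lambda> (card P) (card K)"
      using \<open>card (f ` K) = card K\<close> assms by simp
  next
    fix K assume K: "K \<in> {K. K \<subseteq> P' \<and> 2 \<le> card K}"
    then show "f ` ?g ` K = K" by (intro image_inv_into_cancel[OF bij_betw_imp_surj_on[OF f]]) auto
    have "card (?g ` K) = card K" using K card_image[OF inj_on_subset[OF gi]] by auto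
    moreover have "?g ` K \<subseteq> P" using K g by (auto simp: bij_betw_def)
    ultimately show "?g ` K \<in> {K. K \<subseteq> P \<and> 2 \<le> card K}" using K by auto
  qed
qed



lemma binom_step:
  fixes a :: real and f :: "nat \<Rightarrow> real"
  shows "(\<Sum>i\<le>k. of_nat (k choose i) * a^(k-i) * f (Suc i)) + (\<Sum>i\<le>k. of_nat (k choose i) * a^(Suc k - i) * f i)
       = (\<Sum>i\<le>Suc k. of_nat (Suc k choose i) * a^(Suc k - i) * f i)"
proof -
  have e1: "(\<Sum>i\<le>k. of_nat (k choose i) * a^(Suc k - i) * f i) = (\<Sum>i\<le>Suc k. of_nat (k choose i) * a^(Suc k - i) * f i)"
    by simp
  also have "\<dots> = a^(Suc k) * f 0 + (\<Sum>i\<le>k. of_nat (k choose Suc i) * a^(k - i) * f (Suc i))"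
    by (subst sum.atMost_Suc_shift) simp
  finally have e1': "(\<Sum>i\<le>k. of_nat (k choose i) * a^(Suc k - i) * f i) = a^(Suc k) * f 0 + (\<Sum>i\<le>k. of_nat (k choose Suc i) * a^(k - i) * f (Suc i))" .
  have "(\<Sum>i\<le>Suc k. of_nat (Suc k choose i) * a^(Suc k - i) * f i) = a^(Suc k) * f 0 + (\<Sum>i\<le>k. of_nat (Suc k choose Suc i) * a^(k - i) * f (Suc i))"
    by (subst sum.atMost_Suc_shift) simp
  also have "\<dots> = a^(Suc k) * f 0 + (\<Sum>i\<le>k. of_nat (k choose i) * a^(k - i) * f (Suc i)) + (\<Sum>i\<le>k. of_nat (k choose Suc i) * a^(k - i) * f (Suc i))"
    by (simp add: sum.distrib algebra_simps)
  finally show ?thesis using e1' by simp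
qed

locale qmat =
  fixes S :: "'s set" and Q :: "'s \<Rightarrow> 's \<Rightarrow> real" and c :: real and \<rho> :: "'s \<Rightarrow> nat"
  assumes finS: "finite S"
  and c_nonneg: "0 \<le> c"
  and Anonneg: "x \<in> S \<Longrightarrow> y \<in> S \<Longrightarrow> 0 \<le> Q x y + (if x = y then c else 0)"
  and rowsum: "x \<in> S \<Longrightarrow> (\<Sum>y\<in>S. Q x y) = 0"
  and tri: "x \<in> S \<Longrightarrow> y \<in> S \<Longrightarrow> x \<noteq> y \<Longrightarrow> Q x y \<noteq> 0 \<Longrightarrow> \<rho> y < \<rho> x"
begin

definition A where "A x y = Q x y + (if x = y then c else 0)"

abbreviation Ap where "Ap j x y \<equiv> Qpow S A j x y"

lemma Ap_out: "x \<in> S \<Longrightarrow> y \<notin> S \<Longrightarrow> Ap j x y = 0"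
  by (induction j arbitrary: x) auto

lemma Ap_nonneg: "x \<in> S \<Longrightarrow> 0 \<le> Ap j x y"
proof (induction j arbitrary: x)
  case 0 then show ?case by simp
next
  case (Suc j)
  then show ?case using Anonneg by (auto simp: A_def intro!: sum_nonneg mult_nonneg_nonneg)
qed

lemma A_rowsum: "x \<in> S \<Longrightarrow> (\<Sum>y\<in>S. A x y) = c"
  using rowsum finS by (simp add: A_def sum.distrib)

lemma Ap_rowsum: "x \<in> S \<Longrightarrow> (\<Sum>y\<in>S. Ap j x y) = c ^ j"
proof (induction j arbitrary: x)
  case 0 then show ?case using finS by simp
next
  case (Suc j)
  have "(\<Sum>y\<in>S. Ap (Suc j) x y) = (\<Sum>z\<in>S. A x z * (\<Sum>y\<in>S. Ap j z y))"
    by (simp add: sum_distrib_left) (rule sum.swap)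
  also have "\<dots> = (\<Sum>z\<in>S. A x z * c ^ j)" using Suc.IH by simp
  also have "\<dots> = c ^ Suc j" using A_rowsum[OF Suc.prems] by (simp add: sum_distrib_right[symmetric])
  finally show ?case .
qed

lemma Ap_le: "x \<in> S \<Longrightarrow> Ap j x y \<le> c ^ j"
proof (cases "y \<in> S")
  case True
  assume x: "x \<in> S"
  have "Ap j x y \<le> (\<Sum>y\<in>S. Ap j x y)"
    using True finS Ap_nonneg[OF x] by (intro member_le_sum) auto
  then show ?thesis using Ap_rowsum[OF x] by simp
next
  case False
  assume x: "x \<in> S"
  then show ?thesis using Ap_out[OF x False] c_nonneg by simp
qed

lemma Qpow_binom:
  "x \<in> S \<Longrightarrow> Qpow S Q k x y = (\<Sum>i\<le>k. of_nat (k choose i) * (-c)^(k-i) * Ap i x y)"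
proof (induction k arbitrary: x)
  case 0 then show ?case by simp
next
  case (Suc k)
  let ?F = "\<lambda>z. (\<Sum>i\<le>k. of_nat (k choose i) * (-c)^(k-i) * Ap i z y)"
  have "Qpow S Q (Suc k) x y = (\<Sum>z\<in>S. Q x z * ?F z)"
    using Suc.IH by simp
  also have "\<dots> = (\<Sum>z\<in>S. A x z * ?F z) - (\<Sum>z\<in>S. (if x = z then c else 0) * ?F z)"
    unfolding A_def by (simp add: distrib_right sum.distrib)
  also have "(\<Sum>z\<in>S. (if x = z then c else 0) * ?F z) = c * ?F x"
  proof -
    have eq: "(if x = z then c else 0) * ?F z = (if z = x then c * ?F x else 0)" for z by auto
    show ?thesis unfolding eq using Suc.prems finS by simp
  qed
  also have "(\<Sum>z\<in>S. A x z * ?F z) = (\<Sum>i\<le>k. of_nat (k choose i) * (-c)^(k-i) * Ap (Suc i) x y)"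
    by (simp add: sum_distrib_left sum_distrib_right algebra_simps) (rule sum.swap)
  also have "c * ?F x = - (\<Sum>i\<le>k. of_nat (k choose i) * (-c)^(Suc k - i) * Ap i x y)"
    by (simp add: sum_distrib_left Suc_diff_le algebra_simps sum_negf)
  finally show ?case using binom_step[of k "-c" "\<lambda>i. Ap i x y"] by simp
qed

lemma summable_expo: "summable (\<lambda>n. (x::real) ^ n / fact n)"
  using summable_exp[of x] by (simp add: field_simps)

lemma sums_expo: "(\<lambda>n. (x::real) ^ n / fact n) sums exp x"
  using exp_converges[of x] by (simp add: field_simps)

lemma summable_Ap: "x \<in> S \<Longrightarrow> summable (\<lambda>j. norm (h ^ j / fact j * Ap j x y))"
proof (rule summable_comparison_test[OF _ summable_expo[of "\<bar>h\<bar> * c"]])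
  assume x: "x \<in> S"
  show "\<exists>N. \<forall>n\<ge>N. norm (norm (h ^ n / fact n * Ap n x y)) \<le> (\<bar>h\<bar> * c) ^ n / fact n"
  proof (intro exI allI impI)
    fix n :: nat
    have "norm (norm (h ^ n / fact n * Ap n x y)) = \<bar>h\<bar> ^ n / fact n * Ap n x y"
      using Ap_nonneg[OF x] by (simp add: abs_mult power_abs)
    also have "\<dots> \<le> \<bar>h\<bar> ^ n / fact n * c ^ n"
      using Ap_le[OF x] by (intro mult_left_mono) auto
    finally show "norm (norm (h ^ n / fact n * Ap n x y)) \<le> (\<bar>h\<bar> * c) ^ n / fact n"
      by (simp add: power_mult_distrib)
  qed
qed

lemma trans_eq:
  assumes x: "x \<in> S"
  shows "trans_fun S Q h x y = exp (-c*h) * (\<Sum>j. h ^ j / fact j * Ap j x y)"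
proof -
  define a where "a j = h ^ j / fact j * Ap j x y" for j
  define b where "b j = (-c) ^ j * h ^ j / fact j" for j
  have sa: "summable (\<lambda>j. norm (a j))" unfolding a_def by (rule summable_Ap[OF x])
  have sb: "summable (\<lambda>j. norm (b j))"
    using summable_expo[of "\<bar>c*h\<bar>"] by (simp add: b_def abs_mult power_abs abs_minus_cancel power_mult_distrib)
  have "(\<lambda>k. \<Sum>i\<le>k. a i * b (k - i)) sums (suminf a * suminf b)"
    by (rule Cauchy_product_sums[OF sa sb])
  moreover have "(\<Sum>i\<le>k. a i * b (k - i)) = h ^ k / fact k * Qpow S Q k x y" for k
  proof -
    have "h ^ k / fact k * Qpow S Q k x y = (\<Sum>i\<le>k. h ^ k / fact k * (of_nat (k choose i) * (-c)^(k-i) * Ap i x y))"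
      by (simp add: Qpow_binom[OF x] sum_distrib_left)
    also have "\<dots> = (\<Sum>i\<le>k. a i * b (k - i))"
    proof (rule sum.cong[OF refl])
      fix i assume "i \<in> {..k}"
      then have ik: "i \<le> k" by simp
      have hk: "h ^ k = h ^ i * h ^ (k - i)" using ik by (simp add: power_add[symmetric])
      show "h ^ k / fact k * (of_nat (k choose i) * (-c)^(k-i) * Ap i x y) = a i * b (k - i)"
        unfolding a_def b_def binomial_fact[OF ik] hk
        by (simp add: power_mult_distrib field_simps)
    qed
    finally show ?thesis by simp
  qed
  moreover have "suminf b = exp (-c*h)"
  proof -
    have "b = (\<lambda>n. (-c*h) ^ n / fact n)" unfolding b_def by (simp only: power_mult_distrib)
    then show ?thesis using sums_expo sums_unique by metis
  qed
  ultimately have "(\<lambda>k. h ^ k / fact k * Qpow S Q k x y) sums (suminf a * exp (-c*h))" by simp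
  then show ?thesis unfolding trans_fun_def a_def by (simp add: sums_iff mult.commute)
qed

lemma trans_nonneg: "x \<in> S \<Longrightarrow> 0 \<le> h \<Longrightarrow> 0 \<le> trans_fun S Q h x y"
proof -
  assume x: "x \<in> S" and h: "0 \<le> h"
  have "0 \<le> (\<Sum>j. h ^ j / fact j * Ap j x y)"
    by (rule suminf_nonneg[OF summable_Ap[OF x, THEN summable_norm_cancel]])
       (use h Ap_nonneg[OF x] in auto)
  then show ?thesis unfolding trans_eq[OF x] by simp
qed

lemma trans_rowsum: "x \<in> S \<Longrightarrow> (\<Sum>y\<in>S. trans_fun S Q h x y) = 1"
proof -
  assume x: "x \<in> S"
  have "(\<Sum>y\<in>S. trans_fun S Q h x y) = exp (-c*h) * (\<Sum>y\<in>S. \<Sum>j. h ^ j / fact j * Ap j x y)"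
    by (simp add: trans_eq[OF x] sum_distrib_left)
  also have "(\<Sum>y\<in>S. \<Sum>j. h ^ j / fact j * Ap j x y) = (\<Sum>j. \<Sum>y\<in>S. h ^ j / fact j * Ap j x y)"
    by (rule suminf_sum[symmetric]) (rule summable_Ap[OF x, THEN summable_norm_cancel])
  also have "\<dots> = (\<Sum>j. (h*c) ^ j / fact j)"
  proof -
    have "(\<Sum>y\<in>S. h ^ j / fact j * Ap j x y) = (h*c) ^ j / fact j" for j
    proof -
      have "(\<Sum>y\<in>S. h ^ j / fact j * Ap j x y) = h ^ j / fact j * (\<Sum>y\<in>S. Ap j x y)"
        by (rule sum_distrib_left[symmetric])
      then show ?thesis using Ap_rowsum[OF x] by (simp add: power_mult_distrib)
    qed
    then show ?thesis by (simp only:)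
  qed
  also have "\<dots> = exp (h*c)" using sums_expo sums_unique by metis
  finally show ?thesis by (simp add: exp_add[symmetric])
qed

lemma Ap_tri: "x \<in> S \<Longrightarrow> y \<noteq> x \<Longrightarrow> \<rho> x \<le> \<rho> y \<Longrightarrow> Ap j x y = 0"
proof (induction j arbitrary: x)
  case 0 then show ?case by simp
next
  case (Suc j)
  have "A x z * Ap j z y = 0" if z: "z \<in> S" for z
  proof (cases "z = x")
    case True then show ?thesis using Suc by simp
  next
    case False
    show ?thesis
    proof (cases "A x z = 0")
      case True then show ?thesis by simp
    next
      case F: False
      then have "Q x z \<noteq> 0" using False by (simp add: A_def)
      then have "\<rho> z < \<rho> x" using tri[OF Suc.prems(1) z] False by auto
      then have "y \<noteq> z" "\<rho> z \<le> \<rho> y" using Suc.prems by auto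
      then show ?thesis using Suc.IH[OF z] by simp
    qed
  qed
  then have "(\<Sum>z\<in>S. A x z * Ap j z y) = 0" by (intro sum.neutral) blast
  then show ?case by simp
qed

lemma Ap_diag: "x \<in> S \<Longrightarrow> Ap j x x = (A x x) ^ j"
proof (induction j)
  case 0 then show ?case by simp
next
  case (Suc j)
  have "A x z * Ap j z x = 0" if z: "z \<in> S - {x}" for z
  proof (cases "A x z = 0")
    case True then show ?thesis by simp
  next
    case F: False
    have "x \<noteq> z" using z by auto
    then have "Q x z \<noteq> 0" using F by (simp add: A_def)
    then have "\<rho> z < \<rho> x" using tri[OF Suc.prems _] z by auto
    then show ?thesis using Ap_tri[of z x j] z by auto
  qed
  then have z: "(\<Sum>z\<in>S - {x}. A x z * Ap j z x) = 0" by (intro sum.neutral) blast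
  have "Ap (Suc j) x x = A x x * Ap j x x + (\<Sum>z\<in>S - {x}. A x z * Ap j z x)"
    using Suc.prems finS by (simp add: sum.remove[of S x])
  then have "Ap (Suc j) x x = A x x * Ap j x x" using z by simp
  then show ?case using Suc by simp
qed

lemma trans_diag: "x \<in> S \<Longrightarrow> trans_fun S Q h x x = exp (h * Q x x)"
proof -
  assume x: "x \<in> S"
  have "(\<Sum>j. h ^ j / fact j * Ap j x x) = (\<Sum>j. (h * A x x) ^ j / fact j)"
    by (simp add: Ap_diag[OF x] power_mult_distrib)
  also have "\<dots> = exp (h * A x x)" using sums_expo sums_unique by metis
  finally show ?thesis by (simp add: trans_eq[OF x] A_def exp_add[symmetric] algebra_simps)
qed

lemma trans_tri: "x \<in> S \<Longrightarrow> y \<noteq> x \<Longrightarrow> \<rho> x \<le> \<rho> y \<Longrightarrow> trans_fun S Q h x y = 0"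
  by (simp add: trans_eq Ap_tri)

lemma trans_zero: "x \<in> S \<Longrightarrow> trans_fun S Q 0 x y = (if x = y then 1 else 0)"
proof -
  assume x: "x \<in> S"
  have "(\<Sum>j. (0::real) ^ j / fact j * Ap j x y) = Ap 0 x y"
    by (subst suminf_finite[of "{0}"]) auto
  then show ?thesis by (simp add: trans_eq[OF x])
qed

end



fun Hd :: "(nat \<Rightarrow> real) \<Rightarrow> nat \<Rightarrow> nat \<Rightarrow> real" where
  "Hd a 0 N = (if N = 0 then 1 else 0)"
| "Hd a (Suc d) N = (\<Sum>k<N. (a (Suc d) ^ k - a (Suc d) ^ Suc k) * Hd a d (N - k)) + a (Suc d) ^ N"

lemma Hd_zero: "Hd a d 0 = 1"
  by (cases d) auto

declare Hd.simps(2)[simp del]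

lemma Hd_rec: "Hd a (Suc d) (Suc N) = a (Suc d) * Hd a (Suc d) N + (1 - a (Suc d)) * Hd a d (Suc N)"
proof -
  let ?a = "a (Suc d)"
  have "Hd a (Suc d) (Suc N) = (1 - ?a) * Hd a d (Suc N)
      + (\<Sum>k<N. (?a ^ Suc k - ?a ^ Suc (Suc k)) * Hd a d (N - k)) + ?a ^ Suc N"
    unfolding Hd.simps(2)[of a d "Suc N"] sum.lessThan_Suc_shift by (simp add: algebra_simps)
  also have "(\<Sum>k<N. (?a ^ Suc k - ?a ^ Suc (Suc k)) * Hd a d (N - k)) = ?a * (\<Sum>k<N. (?a ^ k - ?a ^ Suc k) * Hd a d (N - k))"
    by (simp add: sum_distrib_left algebra_simps)
  finally show ?thesis by (simp add: algebra_simps Hd.simps(2)[of a d N])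
qed

lemma Hd_props:
  assumes a0: "\<And>d. 0 \<le> a d" and a1: "\<And>d. a d \<le> 1"
  shows "(\<forall>N. 0 \<le> Hd a d N \<and> Hd a d N \<le> 1) \<and> (\<forall>N. Hd a d (Suc N) \<le> Hd a d N) \<and> (\<forall>N. Hd a d N \<le> Hd a (Suc d) N)"
proof (induction d)
  have main: "(\<forall>N. 0 \<le> Hd a d N \<and> Hd a d N \<le> 1) \<Longrightarrow> (\<forall>N. Hd a d (Suc N) \<le> Hd a d N) \<Longrightarrow>
     (\<forall>N. Hd a d N \<le> Hd a (Suc d) N) \<and> (\<forall>N. 0 \<le> Hd a (Suc d) N \<and> Hd a (Suc d) N \<le> 1)" for d
  proof -
    assume b: "\<forall>N. 0 \<le> Hd a d N \<and> Hd a d N \<le> 1" and m: "\<forall>N. Hd a d (Suc N) \<le> Hd a d N"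
    let ?a = "a (Suc d)"
    have pw: "?a ^ Suc k \<le> ?a ^ k" for k using a0 a1 by (simp add: mult_left_le_one_le)
    have tel: "(\<Sum>k<N. ?a ^ k - ?a ^ Suc k) = 1 - ?a ^ N" for N
      using sum_lessThan_telescope'[of "\<lambda>k. ?a ^ k" N] by simp
    have anti: "Hd a d N \<le> Hd a d M" if "M \<le> N" for M N
      using lift_Suc_antimono_le[of "Hd a d", OF _ that] m by auto
    show ?thesis
    proof (intro conjI allI)
      fix N
      have "(\<Sum>k<N. (?a ^ k - ?a ^ Suc k) * Hd a d N) = (1 - ?a ^ N) * Hd a d N"
        by (simp only: sum_distrib_right[symmetric] tel)
      then have "Hd a d N = (\<Sum>k<N. (?a ^ k - ?a ^ Suc k) * Hd a d N) + ?a ^ N * Hd a d N"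
        by (simp add: algebra_simps)
      also have "\<dots> \<le> (\<Sum>k<N. (?a ^ k - ?a ^ Suc k) * Hd a d (N - k)) + ?a ^ N"
      proof (intro add_mono sum_mono mult_left_mono)
        fix k assume "k \<in> {..<N}"
        show "Hd a d N \<le> Hd a d (N - k)" by (rule anti) simp
        show "0 \<le> ?a ^ k - ?a ^ Suc k" using pw[of k] by simp
      next
        show "?a ^ N * Hd a d N \<le> ?a ^ N" using b a0 by (intro mult_right_le_one_le) auto
      qed
      finally show "Hd a d N \<le> Hd a (Suc d) N" by (simp add: Hd.simps(2))
      have "0 \<le> (\<Sum>k<N. (?a ^ k - ?a ^ Suc k) * Hd a d (N - k))"
        using b pw by (intro sum_nonneg mult_nonneg_nonneg) (auto simp: diff_le_eq)
      then show "0 \<le> Hd a (Suc d) N" using a0 by (simp add: Hd.simps(2))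
      have "(\<Sum>k<N. (?a ^ k - ?a ^ Suc k) * Hd a d (N - k)) \<le> (\<Sum>k<N. (?a ^ k - ?a ^ Suc k))"
        using b pw by (intro sum_mono mult_right_le_one_le) auto
      then show "Hd a (Suc d) N \<le> 1" using tel[of N] by (simp add: Hd.simps(2))
    qed
  qed
  {
    case 0
    have b: "\<forall>N. 0 \<le> Hd a 0 N \<and> Hd a 0 N \<le> 1" by simp
    have m: "\<forall>N. Hd a 0 (Suc N) \<le> Hd a 0 N" by simp
    show ?case using main[OF b m] b m by simp
  next
    case (Suc d)
    then have b0: "\<forall>N. 0 \<le> Hd a d N \<and> Hd a d N \<le> 1"
      and m0: "\<forall>N. Hd a d (Suc N) \<le> Hd a d N" and i0: "\<forall>N. Hd a d N \<le> Hd a (Suc d) N" by auto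
    have b: "\<forall>N. 0 \<le> Hd a (Suc d) N \<and> Hd a (Suc d) N \<le> 1" using main[OF b0 m0] by blast
    have m: "\<forall>N. Hd a (Suc d) (Suc N) \<le> Hd a (Suc d) N"
    proof
      fix N
      have "Hd a d (Suc N) \<le> Hd a (Suc d) N" using m0 i0 order_trans by blast
      then have "(1 - a (Suc d)) * Hd a d (Suc N) \<le> (1 - a (Suc d)) * Hd a (Suc d) N"
        using a1 by (intro mult_left_mono) (auto simp: algebra_simps)
      then show "Hd a (Suc d) (Suc N) \<le> Hd a (Suc d) N" unfolding Hd_rec by (simp add: algebra_simps)
    qed
    show ?case using main[OF b m] b m by simp
  }
qed

definition chop :: "'s set \<Rightarrow> ('s \<Rightarrow> 's \<Rightarrow> real) \<Rightarrow> ('s \<Rightarrow> real) \<Rightarrow> 's \<Rightarrow> real" where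
  "chop S p g x = (\<Sum>y\<in>S. p x y * g y)"

definition gz :: "('s \<Rightarrow> nat) \<Rightarrow> nat \<Rightarrow> 's \<Rightarrow> real" where
  "gz \<rho> m y = (if m < \<rho> y then 1 else 0)"

locale chain =
  fixes S :: "'s set" and p :: "'s \<Rightarrow> 's \<Rightarrow> real" and \<rho> :: "'s \<Rightarrow> nat" and m :: nat and a :: "nat \<Rightarrow> real"
  assumes finS: "finite S"
  and p_nonneg: "\<And>x y. x \<in> S \<Longrightarrow> 0 \<le> p x y"
  and p_row: "\<And>x. x \<in> S \<Longrightarrow> (\<Sum>y\<in>S. p x y) = 1"
  and p_diag: "\<And>x. x \<in> S \<Longrightarrow> m < \<rho> x \<Longrightarrow> p x x = a (\<rho> x - m)"
  and p_tri: "\<And>x y. x \<in> S \<Longrightarrow> y \<noteq> x \<Longrightarrow> \<rho> x \<le> \<rho> y \<Longrightarrow> p x y = 0"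
  and a0: "\<And>d. 0 \<le> a d" and a1: "\<And>d. a d \<le> 1"
begin

abbreviation op where "op \<equiv> chop S p"
abbreviation g0 where "g0 \<equiv> gz \<rho> m"
lemmas op_def = chop_def[of S p]
lemmas g0_def = gz_def[of \<rho> m]

lemma HP: "(\<forall>N. 0 \<le> Hd a d N \<and> Hd a d N \<le> 1) \<and> (\<forall>N. Hd a d (Suc N) \<le> Hd a d N) \<and> (\<forall>N. Hd a d N \<le> Hd a (Suc d) N)"
  by (rule Hd_props[OF a0 a1])

lemma H01: "0 \<le> Hd a d N" "Hd a d N \<le> 1"
  using HP[of d] by auto

lemma H_anti: "M \<le> N \<Longrightarrow> Hd a d N \<le> Hd a d M"
proof -
  assume "M \<le> N"
  have "\<And>n. Hd a d (Suc n) \<le> Hd a d n" using HP[of d] by blast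
  then show ?thesis using lift_Suc_antimono_le[of "Hd a d", OF _ \<open>M \<le> N\<close>] by blast
qed

lemma H_mono: "e \<le> d \<Longrightarrow> Hd a e N \<le> Hd a d N"
proof -
  assume "e \<le> d"
  have "\<And>n. Hd a n N \<le> Hd a (Suc n) N" using HP by blast
  then show ?thesis using lift_Suc_mono_le[of "\<lambda>d. Hd a d N", OF _ \<open>e \<le> d\<close>] by blast
qed

lemma chain_bound:
  "x \<in> S \<Longrightarrow> 0 \<le> (op ^^ N) g0 x \<and> (\<rho> x \<le> m \<longrightarrow> (op ^^ N) g0 x = 0)
     \<and> (m < \<rho> x \<longrightarrow> (op ^^ N) g0 x \<le> Hd a (\<rho> x - m) (N - (\<rho> x - m)))"
proof (induction N arbitrary: x)
  case 0
  then show ?case by (simp add: g0_def Hd_zero)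
next
  case (Suc N)
  let ?u = "(op ^^ N) g0"
  have u: "(op ^^ Suc N) g0 x = (\<Sum>y\<in>S. p x y * ?u y)" by (simp add: op_def)
  have nn: "0 \<le> (op ^^ Suc N) g0 x"
    unfolding u using Suc.IH p_nonneg[OF Suc.prems] by (auto intro!: sum_nonneg mult_nonneg_nonneg)
  have low: "(op ^^ Suc N) g0 x = 0" if le: "\<rho> x \<le> m"
  proof -
    have "p x y * ?u y = 0" if y: "y \<in> S" for y
    proof (cases "y = x")
      case True then show ?thesis using Suc.IH[OF Suc.prems] le by simp
    next
      case False
      show ?thesis
      proof (cases "\<rho> x \<le> \<rho> y")
        case True then show ?thesis using p_tri[OF Suc.prems False] by simp
      next
        case False then show ?thesis using Suc.IH[OF y] le by simp
      qed
    qed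
    then show ?thesis unfolding u by (intro sum.neutral) blast
  qed
  have high: "(op ^^ Suc N) g0 x \<le> Hd a (\<rho> x - m) (Suc N - (\<rho> x - m))" if hi: "m < \<rho> x"
  proof -
    define d where "d = \<rho> x - m - 1"
    have dd: "\<rho> x - m = Suc d" using hi by (simp add: d_def)
    let ?a = "a (Suc d)"
    have pxx: "p x x = ?a" using p_diag[OF Suc.prems hi] dd by simp
    have t1: "p x x * ?u x \<le> ?a * Hd a (Suc d) (N - Suc d)"
      using Suc.IH[OF Suc.prems] hi dd pxx a0 by (simp add: mult_left_mono)
    have t2: "p x y * ?u y \<le> p x y * Hd a d (N - d)" if y: "y \<in> S - {x}" for y
    proof (cases "\<rho> x \<le> \<rho> y")
      case True then show ?thesis using p_tri[OF Suc.prems, of y] y by simp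
    next
      case False
      have pn: "0 \<le> p x y" using p_nonneg[OF Suc.prems] .
      show ?thesis
      proof (cases "\<rho> y \<le> m")
        case True then show ?thesis using Suc.IH[of y] y pn H01 by (simp add: mult_nonneg_nonneg)
      next
        case F2: False
        then have "?u y \<le> Hd a (\<rho> y - m) (N - (\<rho> y - m))" using Suc.IH[of y] y by simp
        also have "\<dots> \<le> Hd a d (N - (\<rho> y - m))" using False dd by (intro H_mono) simp
        also have "\<dots> \<le> Hd a d (N - d)" using False dd by (intro H_anti) simp
        finally show ?thesis using pn by (simp add: mult_left_mono)
      qed
    qed
    have rs: "(\<Sum>y\<in>S - {x}. p x y) = 1 - ?a"
      using p_row[OF Suc.prems] finS Suc.prems pxx by (simp add: sum.remove)
    have "(op ^^ Suc N) g0 x = p x x * ?u x + (\<Sum>y\<in>S - {x}. p x y * ?u y)"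
      unfolding u using finS Suc.prems by (simp add: sum.remove)
    also have "\<dots> \<le> ?a * Hd a (Suc d) (N - Suc d) + (\<Sum>y\<in>S - {x}. p x y * Hd a d (N - d))"
      using t1 t2 by (intro add_mono sum_mono) auto
    also have "(\<Sum>y\<in>S - {x}. p x y * Hd a d (N - d)) = (1 - ?a) * Hd a d (N - d)"
      using rs by (simp add: sum_distrib_right[symmetric])
    also have "?a * Hd a (Suc d) (N - Suc d) + (1 - ?a) * Hd a d (N - d) \<le> Hd a (Suc d) (Suc N - Suc d)"
    proof (cases "Suc d \<le> N")
      case True
      then have e1: "Suc N - Suc d = Suc (N - Suc d)" and e2: "N - d = Suc (N - Suc d)" by auto
      show ?thesis unfolding e1 e2 Hd_rec by simp
    next
      case False
      then have "Suc N - Suc d = 0" by simp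
      then have "Hd a (Suc d) (Suc N - Suc d) = 1" by (simp add: Hd_zero)
      moreover have "?a * Hd a (Suc d) (N - Suc d) + (1 - ?a) * Hd a d (N - d) \<le> ?a * 1 + (1 - ?a) * 1"
        using H01 a0 a1 by (intro add_mono mult_left_mono) auto
      ultimately show ?thesis by simp
    qed
    finally show ?thesis using dd by simp
  qed
  show ?case using nn low high by simp
qed

end



definition cc :: "real measure \<Rightarrow> nat \<Rightarrow> real" where
  "cc \<Lambda> n = (\<Sum>P\<in>partitions_of n. rate \<Lambda> P)"

abbreviation tr :: "real measure \<Rightarrow> nat \<Rightarrow> real \<Rightarrow> nat set set \<Rightarrow> nat set set \<Rightarrow> real" where
  "tr \<Lambda> n \<equiv> trans_fun (partitions_of n) (coal_gen \<Lambda>)"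

lemma qm: assumes L: "lambda_measure \<Lambda>"
  shows "qmat (partitions_of n) (coal_gen \<Lambda>) (cc \<Lambda> n) card"
proof
  show "finite (partitions_of n)" by (rule finite_partitions)
  show "0 \<le> cc \<Lambda> n" unfolding cc_def using L by (auto intro!: sum_nonneg rate_nonneg)
  fix x y assume x: "x \<in> partitions_of n"
  show "(\<Sum>y\<in>partitions_of n. coal_gen \<Lambda> x y) = 0" using coal_gen_rowsum[OF x] .
  assume y: "y \<in> partitions_of n"
  show "0 \<le> coal_gen \<Lambda> x y + (if x = y then cc \<Lambda> n else 0)"
  proof (cases "x = y")
    case True
    have "rate \<Lambda> x \<le> cc \<Lambda> n" unfolding cc_def
      using x L finite_partitions by (intro member_le_sum) (auto intro: rate_nonneg)
    then show ?thesis using True coal_gen_diag[OF x] by simp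
  next
    case False then show ?thesis using coal_gen_offdiag_nonneg[OF L False] by simp
  qed
  show "x \<noteq> y \<Longrightarrow> coal_gen \<Lambda> x y \<noteq> 0 \<Longrightarrow> card y < card x"
    using coal_gen_offdiag_card[OF x] by blast
qed

lemma tr_nonneg: "lambda_measure \<Lambda> \<Longrightarrow> x \<in> partitions_of n \<Longrightarrow> 0 \<le> h \<Longrightarrow> 0 \<le> tr \<Lambda> n h x y"
  using qmat.trans_nonneg[OF qm] by blast

lemma tr_row: "lambda_measure \<Lambda> \<Longrightarrow> x \<in> partitions_of n \<Longrightarrow> (\<Sum>y\<in>partitions_of n. tr \<Lambda> n h x y) = 1"
  using qmat.trans_rowsum[OF qm] by blast

lemma tr_tri: "lambda_measure \<Lambda> \<Longrightarrow> x \<in> partitions_of n \<Longrightarrow> y \<noteq> x \<Longrightarrow> card x \<le> card y \<Longrightarrow> tr \<Lambda> n h x y = 0"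
  using qmat.trans_tri[OF qm] by blast

lemma tr_zero: "lambda_measure \<Lambda> \<Longrightarrow> x \<in> partitions_of n \<Longrightarrow> tr \<Lambda> n 0 x y = (if x = y then 1 else 0)"
  using qmat.trans_zero[OF qm] by blast

lemma tr_diag: "lambda_measure \<Lambda> \<Longrightarrow> x \<in> partitions_of n \<Longrightarrow> tr \<Lambda> n h x x = exp (- h * rate \<Lambda> (singletons (card x)))"
proof -
  assume L: "lambda_measure \<Lambda>" and x: "x \<in> partitions_of n"
  have "rate \<Lambda> x = rate \<Lambda> (singletons (card x))"
    using partitions_finite[OF x] partitions_finite[OF singletons_in] card_singletons
    by (intro rate_card) auto
  then show ?thesis using qmat.trans_diag[OF qm[OF L] x] coal_gen_diag[OF x] by simp
qed

locale coal =
  fixes \<Lambda> :: "real measure" and n :: nat and M :: "'a measure" and X :: "real \<Rightarrow> 'a \<Rightarrow> nat set set"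
  assumes L: "lambda_measure \<Lambda>" and P: "prob_space M" and C: "is_coalescent \<Lambda> n M X"
begin

interpretation prob_space M by (rule P)

lemma Xmeas: "X s \<in> measurable M (count_space UNIV)"
  using C unfolding is_coalescent_def by blast

lemma ev_sets: "{\<omega>\<in>space M. X s \<omega> \<in> B} \<in> sets M"
proof -
  have "X s -` B \<inter> space M \<in> sets M" by (rule measurable_sets[OF Xmeas]) auto
  moreover have "X s -` B \<inter> space M = {\<omega>\<in>space M. X s \<omega> \<in> B}" by auto
  ultimately show ?thesis by simp
qed

lemma ev_sets': "{\<omega>\<in>space M. P (X s \<omega>)} \<in> sets M"
  using ev_sets[of s "{x. P x}"] by simp

lemma ev_eq[measurable]: "{\<omega>\<in>space M. X s \<omega> = y} \<in> sets M"
  using ev_sets[of s "{y}"] by simp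

lemma ev_card[measurable]: "{\<omega>\<in>space M. m < card (X s \<omega>)} \<in> sets M"
  using ev_sets[of s "{x. m < card x}"] by simp

lemma ev_S[measurable]: "{\<omega>\<in>space M. X s \<omega> \<in> B} \<in> sets M"
  by (rule ev_sets)

lemma ev_eq2[measurable]: "{\<omega>\<in>space M. X a \<omega> = x \<and> X b \<omega> = y} \<in> sets M"
proof -
  have "{\<omega>\<in>space M. X a \<omega> = x \<and> X b \<omega> = y} = {\<omega>\<in>space M. X a \<omega> = x} \<inter> {\<omega>\<in>space M. X b \<omega> = y}" by auto
  then show ?thesis using ev_eq by auto
qed

lemma fdd:
  assumes "sorted ts" "\<forall>s\<in>set ts. 0 \<le> s" "length xs = length ts"
  shows "measure M {\<omega>\<in>space M. \<forall>i<length ts. X (ts ! i) \<omega> = xs ! i}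
        = (\<Prod>i<length ts. tr \<Lambda> n (ts ! i - (if i = 0 then 0 else ts ! (i - 1)))
               (if i = 0 then singletons n else xs ! (i - 1)) (xs ! i))"
  using C assms unfolding is_coalescent_def by blast

lemma fdd1: "0 \<le> s \<Longrightarrow> measure M {\<omega>\<in>space M. X s \<omega> = y} = tr \<Lambda> n s (singletons n) y"
  using fdd[of "[s]" "[y]"] by simp

lemma fdd2: "0 \<le> a \<Longrightarrow> 0 \<le> b \<Longrightarrow>
  measure M {\<omega>\<in>space M. X a \<omega> = x \<and> X (a + b) \<omega> = y} = tr \<Lambda> n a (singletons n) x * tr \<Lambda> n b x y"
proof -
  assume a: "0 \<le> a" and b: "0 \<le> b"
  have "{\<omega>\<in>space M. \<forall>i<length [a, a+b]. X ([a, a+b] ! i) \<omega> = [x, y] ! i}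
      = {\<omega>\<in>space M. X a \<omega> = x \<and> X (a + b) \<omega> = y}"
    by (auto simp: less_Suc_eq numeral_2_eq_2)
  moreover have "(\<Prod>i<length [a, a+b]. tr \<Lambda> n ([a, a+b] ! i - (if i = 0 then 0 else [a, a+b] ! (i - 1)))
               (if i = 0 then singletons n else [x, y] ! (i - 1)) ([x, y] ! i))
     = tr \<Lambda> n a (singletons n) x * tr \<Lambda> n b x y"
    by (simp add: numeral_2_eq_2 lessThan_Suc)
  ultimately show ?thesis using fdd[of "[a, a+b]" "[x, y]"] a b by simp
qed

lemma probS: "0 \<le> s \<Longrightarrow> prob {\<omega>\<in>space M. X s \<omega> \<in> partitions_of n} = 1"
proof -
  assume s: "0 \<le> s"
  have "{\<omega>\<in>space M. X s \<omega> \<in> partitions_of n} = (\<Union>y\<in>partitions_of n. {\<omega>\<in>space M. X s \<omega> = y})" by auto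
  then have "prob {\<omega>\<in>space M. X s \<omega> \<in> partitions_of n} = (\<Sum>y\<in>partitions_of n. prob {\<omega>\<in>space M. X s \<omega> = y})"
    by (simp only:) (intro finite_measure_finite_Union[OF finite_partitions], auto simp: disjoint_family_on_def)
  also have "\<dots> = 1" using fdd1[OF s] tr_row[OF L singletons_in] by simp
  finally show ?thesis .
qed

lemma prob_notS: "0 \<le> s \<Longrightarrow> prob {\<omega>\<in>space M. X s \<omega> \<notin> partitions_of n} = 0"
proof -
  assume s: "0 \<le> s"
  have "{\<omega>\<in>space M. X s \<omega> \<notin> partitions_of n} = space M - {\<omega>\<in>space M. X s \<omega> \<in> partitions_of n}" by auto
  then show ?thesis using finite_measure_compl[OF ev_sets] probS[OF s] prob_space by simp
qed

lemma restrict_S: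
  assumes s: "0 \<le> s" and A: "A \<in> sets M"
  shows "prob A \<le> prob (A \<inter> {\<omega>\<in>space M. X s \<omega> \<in> partitions_of n})"
proof -
  have "A \<subseteq> (A \<inter> {\<omega>\<in>space M. X s \<omega> \<in> partitions_of n}) \<union> {\<omega>\<in>space M. X s \<omega> \<notin> partitions_of n}"
    using sets.sets_into_space[OF A] by auto
  then have "prob A \<le> prob ((A \<inter> {\<omega>\<in>space M. X s \<omega> \<in> partitions_of n}) \<union> {\<omega>\<in>space M. X s \<omega> \<notin> partitions_of n})"
    using A ev_sets ev_sets' by (intro finite_measure_mono) auto
  also have "\<dots> \<le> prob (A \<inter> {\<omega>\<in>space M. X s \<omega> \<in> partitions_of n}) + prob {\<omega>\<in>space M. X s \<omega> \<notin> partitions_of n}"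
    using A ev_sets ev_sets' by (intro measure_Un_le) auto
  finally show ?thesis using prob_notS[OF s] by simp
qed

lemma semigroup:
  assumes a: "0 \<le> a" and b: "0 \<le> b"
  shows "tr \<Lambda> n (a + b) (singletons n) y = (\<Sum>x\<in>partitions_of n. tr \<Lambda> n a (singletons n) x * tr \<Lambda> n b x y)"
proof -
  let ?A = "{\<omega>\<in>space M. X (a + b) \<omega> = y}"
  let ?B = "{\<omega>\<in>space M. X a \<omega> \<in> partitions_of n}"
  have "?A \<inter> ?B = (\<Union>x\<in>partitions_of n. {\<omega>\<in>space M. X a \<omega> = x \<and> X (a + b) \<omega> = y})" by auto
  then have "prob (?A \<inter> ?B) = (\<Sum>x\<in>partitions_of n. prob {\<omega>\<in>space M. X a \<omega> = x \<and> X (a + b) \<omega> = y})"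
    by (simp only:) (intro finite_measure_finite_Union[OF finite_partitions], auto simp: disjoint_family_on_def)
  then have e: "prob (?A \<inter> ?B) = (\<Sum>x\<in>partitions_of n. tr \<Lambda> n a (singletons n) x * tr \<Lambda> n b x y)"
    using fdd2[OF a b] by simp
  have "prob ?A \<le> prob (?A \<inter> ?B)" by (rule restrict_S[OF a ev_sets'])
  moreover have "prob (?A \<inter> ?B) \<le> prob ?A" by (intro finite_measure_mono) (auto simp: ev_sets')
  moreover have "prob ?A = tr \<Lambda> n (a + b) (singletons n) y" using fdd1 a b by simp
  ultimately show ?thesis using e by simp
qed

lemma card_bound:
  assumes s: "0 \<le> s"
  shows "prob {\<omega>\<in>space M. m < card (X s \<omega>)} \<le> (\<Sum>y\<in>partitions_of n. tr \<Lambda> n s (singletons n) y * (if m < card y then 1 else 0))"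
proof -
  let ?Sm = "{y\<in>partitions_of n. m < card y}"
  have "prob {\<omega>\<in>space M. m < card (X s \<omega>)} \<le> prob ({\<omega>\<in>space M. m < card (X s \<omega>)} \<inter> {\<omega>\<in>space M. X s \<omega> \<in> partitions_of n})"
    by (rule restrict_S[OF s ev_sets'])
  also have "{\<omega>\<in>space M. m < card (X s \<omega>)} \<inter> {\<omega>\<in>space M. X s \<omega> \<in> partitions_of n} = (\<Union>y\<in>?Sm. {\<omega>\<in>space M. X s \<omega> = y})"
    by auto
  also have "prob \<dots> = (\<Sum>y\<in>?Sm. prob {\<omega>\<in>space M. X s \<omega> = y})"
    using finite_partitions
    by (intro finite_measure_finite_Union) (auto simp: disjoint_family_on_def ev_eq)
  also have "\<dots> = (\<Sum>y\<in>?Sm. tr \<Lambda> n s (singletons n) y)" using fdd1[OF s] by simp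
  also have "\<dots> = (\<Sum>y\<in>partitions_of n. tr \<Lambda> n s (singletons n) y * (if m < card y then 1 else 0))"
    using finite_partitions by (simp add: sum.inter_filter[symmetric] if_distrib cong: if_cong)
  finally show ?thesis .
qed

end



context coal begin

interpretation prob_space M by (rule P)

lemma pathsum:
  assumes h: "0 \<le> h"
  shows "(\<Sum>y\<in>partitions_of n. tr \<Lambda> n (real N * h) (singletons n) y * g y)
       = (chop (partitions_of n) (tr \<Lambda> n h) ^^ N) g (singletons n)"
proof (induction N arbitrary: g)
  case 0
  have "(\<Sum>y\<in>partitions_of n. tr \<Lambda> n 0 (singletons n) y * g y) = (\<Sum>y\<in>partitions_of n. if y = singletons n then g y else 0)"
    using tr_zero[OF L singletons_in] by (intro sum.cong) auto
  then show ?case using finite_partitions singletons_in by simp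
next
  case (Suc N)
  let ?op = "chop (partitions_of n) (tr \<Lambda> n h)"
  have e: "real (Suc N) * h = real N * h + h" by (simp add: algebra_simps)
  have "(\<Sum>y\<in>partitions_of n. tr \<Lambda> n (real (Suc N) * h) (singletons n) y * g y)
     = (\<Sum>y\<in>partitions_of n. (\<Sum>x\<in>partitions_of n. tr \<Lambda> n (real N * h) (singletons n) x * tr \<Lambda> n h x y) * g y)"
    unfolding e using semigroup[of "real N * h" h] h by simp
  also have "\<dots> = (\<Sum>x\<in>partitions_of n. tr \<Lambda> n (real N * h) (singletons n) x * (\<Sum>y\<in>partitions_of n. tr \<Lambda> n h x y * g y))"
    by (simp add: sum_distrib_left sum_distrib_right mult.assoc) (rule sum.swap)
  also have "\<dots> = (\<Sum>x\<in>partitions_of n. tr \<Lambda> n (real N * h) (singletons n) x * ?op g x)"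
    by (simp add: chop_def)
  also have "\<dots> = (?op ^^ N) (?op g) (singletons n)" by (rule Suc.IH)
  also have "\<dots> = (?op ^^ Suc N) g (singletons n)" by (simp add: funpow_Suc_right del: funpow.simps)
  finally show ?case .
qed

lemma M_bound:
  assumes h: "0 < h" and mn: "m < n"
  shows "prob {\<omega>\<in>space M. m < card (X (real N * h) \<omega>)}
     \<le> Hd (\<lambda>d. exp (- h * rate \<Lambda> (singletons (m + d)))) (n - m) (N - (n - m))"
proof -
  define a where "a d = exp (- h * rate \<Lambda> (singletons (m + d)))" for d
  interpret ch: chain "partitions_of n" "tr \<Lambda> n h" card m a
  proof
    show "finite (partitions_of n)" by (rule finite_partitions)
    show "\<And>x y. x \<in> partitions_of n \<Longrightarrow> 0 \<le> tr \<Lambda> n h x y" using tr_nonneg[OF L] h by simp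
    show "\<And>x. x \<in> partitions_of n \<Longrightarrow> (\<Sum>y\<in>partitions_of n. tr \<Lambda> n h x y) = 1" using tr_row[OF L] by simp
    show "\<And>x. x \<in> partitions_of n \<Longrightarrow> m < card x \<Longrightarrow> tr \<Lambda> n h x x = a (card x - m)"
      using tr_diag[OF L] by (simp add: a_def)
    show "\<And>x y. x \<in> partitions_of n \<Longrightarrow> y \<noteq> x \<Longrightarrow> card x \<le> card y \<Longrightarrow> tr \<Lambda> n h x y = 0"
      using tr_tri[OF L] by simp
    show "\<And>d. 0 \<le> a d" by (simp add: a_def)
    show "\<And>d. a d \<le> 1" using rate_nonneg[OF L] h by (simp add: a_def)
  qed
  have "prob {\<omega>\<in>space M. m < card (X (real N * h) \<omega>)}
     \<le> (\<Sum>y\<in>partitions_of n. tr \<Lambda> n (real N * h) (singletons n) y * ch.g0 y)"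
    using card_bound[of "real N * h" m] h unfolding gz_def by simp
  also have "\<dots> = (ch.op ^^ N) ch.g0 (singletons n)" using pathsum h by simp
  also have "\<dots> \<le> Hd a (n - m) (N - (n - m))"
    using ch.chain_bound[OF singletons_in, of N] mn card_singletons by simp
  finally show ?thesis unfolding a_def .
qed

end



lemma hit_nonneg: "0 \<le> hitting_time X m \<omega>"
  unfolding hitting_time_def by (auto intro!: Inf_greatest)

lemma hit_le: "0 \<le> u \<Longrightarrow> card (X u \<omega>) \<le> m \<Longrightarrow> hitting_time X m \<omega> \<le> ereal u"
  unfolding hitting_time_def by (auto intro!: Inf_lower)

lemma hit_char:
  assumes rc: "\<forall>t\<ge>0. \<exists>e>0. \<forall>s. t \<le> s \<and> s < t + e \<longrightarrow> X s \<omega> = X t \<omega>"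
  shows "ereal s \<le> hitting_time X m \<omega> \<longleftrightarrow>
    (\<forall>q::rat. 0 \<le> real_of_rat q \<and> real_of_rat q < s \<longrightarrow> m < card (X (real_of_rat q) \<omega>))"
proof
  assume a: "ereal s \<le> hitting_time X m \<omega>"
  show "\<forall>q::rat. 0 \<le> real_of_rat q \<and> real_of_rat q < s \<longrightarrow> m < card (X (real_of_rat q) \<omega>)"
  proof (intro allI impI)
    fix q :: rat assume q: "0 \<le> real_of_rat q \<and> real_of_rat q < s"
    show "m < card (X (real_of_rat q) \<omega>)"
    proof (rule ccontr)
      assume "\<not> m < card (X (real_of_rat q) \<omega>)"
      then have "hitting_time X m \<omega> \<le> ereal (real_of_rat q)" using q by (intro hit_le) auto
      from order_trans[OF a this] q show False by simp
    qed
  qed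
next
  assume b: "\<forall>q::rat. 0 \<le> real_of_rat q \<and> real_of_rat q < s \<longrightarrow> m < card (X (real_of_rat q) \<omega>)"
  show "ereal s \<le> hitting_time X m \<omega>"
    unfolding hitting_time_def
  proof (rule Inf_greatest)
    fix x assume "x \<in> (\<lambda>s. ereal s) ` {s. 0 \<le> s \<and> card (X s \<omega>) \<le> m}"
    then obtain u where u: "x = ereal u" "0 \<le> u" "card (X u \<omega>) \<le> m" by auto
    show "ereal s \<le> x"
    proof (rule ccontr)
      assume "\<not> ereal s \<le> x"
      then have us: "u < s" using u by auto
      obtain e where e: "e > 0" "\<forall>v. u \<le> v \<and> v < u + e \<longrightarrow> X v \<omega> = X u \<omega>" using rc u(2) by blast
      have "u < min (u + e) s" using e us by simp
      then obtain r where r: "r \<in> \<rat>" "u < r" "r < min (u + e) s" using Rats_dense_in_real by blast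
      from r(1) obtain q where q: "r = real_of_rat q" by (auto elim: Rats_cases)
      have "u \<le> r \<and> r < u + e" using r by auto
      with e(2) have "X r \<omega> = X u \<omega>" by blast
      moreover have "m < card (X r \<omega>)"
      proof -
        have h1: "0 \<le> real_of_rat q" using r(2) q u(2) by linarith
        have h2: "real_of_rat q < s" using r(3) q by simp
        show ?thesis using b h1 h2 q by blast
      qed
      ultimately show False using u(3) by simp
    qed
  qed
qed

context coal begin

interpretation prob_space M by (rule P)

lemma rc: "\<omega> \<in> space M \<Longrightarrow> \<forall>t\<ge>0. \<exists>e>0. \<forall>s. t \<le> s \<and> s < t + e \<longrightarrow> X s \<omega> = X t \<omega>"
  using C unfolding is_coalescent_def by blast

lemma hit_sets: "{\<omega>\<in>space M. ereal s \<le> hitting_time X m \<omega>} \<in> sets M"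
proof -
  have "{\<omega>\<in>space M. ereal s \<le> hitting_time X m \<omega>} = {\<omega>\<in>space M. \<forall>q::rat. 0 \<le> real_of_rat q \<and> real_of_rat q < s \<longrightarrow> m < card (X (real_of_rat q) \<omega>)}"
  proof (intro Collect_cong conj_cong refl)
    fix \<omega> assume w: "\<omega> \<in> space M"
    show "ereal s \<le> hitting_time X m \<omega> \<longleftrightarrow> (\<forall>q::rat. 0 \<le> real_of_rat q \<and> real_of_rat q < s \<longrightarrow> m < card (X (real_of_rat q) \<omega>))"
      by (rule hit_char[where X=X and \<omega>=\<omega>, OF rc[OF w]])
  qed
  also have "\<dots> \<in> sets M"
  proof (rule sets.sets_Collect_countable_All)
    fix q :: rat
    show "{\<omega>\<in>space M. 0 \<le> real_of_rat q \<and> real_of_rat q < s \<longrightarrow> m < card (X (real_of_rat q) \<omega>)} \<in> sets M"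
    proof (cases "0 \<le> real_of_rat q \<and> real_of_rat q < s")
      case True then show ?thesis using ev_card by simp
    next
      case False then show ?thesis by simp
    qed
  qed
  finally show ?thesis .
qed

lemma hit_meas: "hitting_time X m \<in> borel_measurable M"
proof (rule borel_measurableI_ge)
  fix y :: ereal
  show "{\<omega>\<in>space M. y \<le> hitting_time X m \<omega>} \<in> sets M"
  proof (cases y)
    case (real r) then show ?thesis using hit_sets by simp
  next
    case PInf
    have "{\<omega>\<in>space M. y \<le> hitting_time X m \<omega>} = {\<omega>\<in>space M. \<forall>k::nat. ereal (real k) \<le> hitting_time X m \<omega>}"
    proof (intro Collect_cong conj_cong refl iffI allI)
      fix \<omega> assume "y \<le> hitting_time X m \<omega>"
      then show "\<And>k. ereal (real k) \<le> hitting_time X m \<omega>" using PInf by simp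
    next
      fix \<omega> assume a: "\<forall>k::nat. ereal (real k) \<le> hitting_time X m \<omega>"
      show "y \<le> hitting_time X m \<omega>"
      proof (cases "hitting_time X m \<omega>")
        case (real x)
        obtain k :: nat where "x < real k" using reals_Archimedean2 by blast
        then show ?thesis using a[rule_format, of k] real by simp
      next
        case PInf then show ?thesis by simp
      next
        case MInf then show ?thesis using a[rule_format, of 0] by simp
      qed
    qed
    also have "\<dots> \<in> sets M"
      by (rule sets.sets_Collect_countable_All) (use hit_sets in simp)
    finally show ?thesis .
  next
    case MInf then show ?thesis by simp
  qed
qed

lemma tail_step:
  assumes n2: "2 \<le> n" and u: "0 \<le> u" "u < s"
  shows "prob {\<omega>\<in>space M. ereal s \<le> hitting_time X (n - 1) \<omega>} \<le> exp (- u * rate \<Lambda> (singletons n))"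
proof -
  let ?S = "partitions_of n" and ?s1 = "singletons n"
  have sub: "{\<omega>\<in>space M. ereal s \<le> hitting_time X (n - 1) \<omega>} \<subseteq> {\<omega>\<in>space M. n - 1 < card (X u \<omega>)}"
  proof
    fix \<omega> assume w: "\<omega> \<in> {\<omega>\<in>space M. ereal s \<le> hitting_time X (n - 1) \<omega>}"
    then have a: "ereal s \<le> hitting_time X (n - 1) \<omega>" and ws: "\<omega> \<in> space M" by auto
    have "n - 1 < card (X u \<omega>)"
    proof (rule ccontr)
      assume "\<not> n - 1 < card (X u \<omega>)"
      then have "hitting_time X (n - 1) \<omega> \<le> ereal u" using u by (intro hit_le) auto
      from order_trans[OF a this] u show False by simp
    qed
    then show "\<omega> \<in> {\<omega>\<in>space M. n - 1 < card (X u \<omega>)}" using ws by simp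
  qed
  have "prob {\<omega>\<in>space M. ereal s \<le> hitting_time X (n - 1) \<omega>} \<le> prob {\<omega>\<in>space M. n - 1 < card (X u \<omega>)}"
    using sub by (intro finite_measure_mono) (auto simp: ev_card)
  also have "\<dots> \<le> (\<Sum>y\<in>?S. tr \<Lambda> n u ?s1 y * (if n - 1 < card y then 1 else 0))"
    by (rule card_bound[OF u(1)])
  also have "\<dots> = (\<Sum>y\<in>?S. if y = ?s1 then tr \<Lambda> n u ?s1 ?s1 else 0)"
  proof (rule sum.cong[OF refl])
    fix y assume y: "y \<in> ?S"
    show "tr \<Lambda> n u ?s1 y * (if n - 1 < card y then 1 else 0) = (if y = ?s1 then tr \<Lambda> n u ?s1 ?s1 else 0)"
    proof (cases "y = ?s1")
      case True then show ?thesis using card_singletons[of n] n2 by simp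
    next
      case False
      show ?thesis
      proof (cases "n - 1 < card y")
        case True
        then have "card ?s1 \<le> card y" using card_singletons[of n] n2 by simp
        then show ?thesis using tr_tri[OF L singletons_in False] False by simp
      qed (use False in simp)
    qed
  qed
  also have "\<dots> = tr \<Lambda> n u ?s1 ?s1" using finite_partitions singletons_in by simp
  also have "\<dots> = exp (- u * rate \<Lambda> (singletons n))" using tr_diag[OF L singletons_in] card_singletons by simp
  finally show ?thesis .
qed

lemma tail_upper:
  assumes n2: "2 \<le> n" and s: "0 < s"
  shows "prob {\<omega>\<in>space M. ereal s \<le> hitting_time X (n - 1) \<omega>} \<le> exp (- s * rate \<Lambda> (singletons n))"
proof -
  let ?q = "rate \<Lambda> (singletons n)"
  have "(\<lambda>k. exp (- (s - s * inverse (real (Suc k))) * ?q)) \<longlonglongrightarrow> exp (- (s - s * 0) * ?q)"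
    by (intro tendsto_intros LIMSEQ_inverse_real_of_nat)
  then have lim: "(\<lambda>k. exp (- (s - s * inverse (real (Suc k))) * ?q)) \<longlonglongrightarrow> exp (- s * ?q)" by simp
  show ?thesis
  proof (rule LIMSEQ_le_const[OF lim], intro exI allI impI)
    fix k :: nat
    have "s * inverse (real (Suc k)) \<le> s" using s by (simp add: field_simps)
    then have "0 \<le> s - s * inverse (real (Suc k))" by simp
    moreover have "s - s * inverse (real (Suc k)) < s" using s by simp
    ultimately show "prob {\<omega>\<in>space M. ereal s \<le> hitting_time X (n - 1) \<omega>} \<le> exp (- (s - s * inverse (real (Suc k))) * ?q)"
      by (rule tail_step[OF n2])
  qed
qed

lemma tail_lower:
  assumes n2: "2 \<le> n" and s: "0 < s"
  shows "exp (- s * rate \<Lambda> (singletons n)) \<le> prob {\<omega>\<in>space M. ereal s \<le> hitting_time X (n - 1) \<omega>}"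
proof -
  let ?q = "rate \<Lambda> (singletons n)" and ?s1 = "singletons n"
  have q0: "0 \<le> ?q" by (rule rate_nonneg[OF L])
  define D where "D = {r::rat. 0 \<le> real_of_rat r \<and> real_of_rat r < s}"
  have D0: "0 \<in> D" using s by (simp add: D_def)
  then have Dne: "D \<noteq> {}" by auto
  have Dc: "countable D" by (rule countableI_type)
  define f where "f = from_nat_into D"
  have fD: "f j \<in> D" for j unfolding f_def using from_nat_into[OF Dne] .
  have rf: "range f = D" unfolding f_def using range_from_nat_into[OF Dne Dc] .
  define G where "G k = {\<omega>\<in>space M. \<forall>j\<in>{..<k}. X (real_of_rat (f j)) \<omega> = ?s1}" for k
  have Gs: "G k \<in> sets M" for k
    unfolding G_def by (rule sets.sets_Collect_finite_All) (auto simp: ev_eq)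
  have Gb: "exp (- s * ?q) \<le> prob (G k)" for k
  proof -
    define F where "F = (\<lambda>j. real_of_rat (f j)) ` {..<k}"
    define ts where "ts = sorted_list_of_set F"
    have finF: "finite F" unfolding F_def by simp
    have setts: "set ts = F" unfolding ts_def using finF by simp
    have sts: "sorted ts" unfolding ts_def by simp
    have Fb: "t \<in> F \<Longrightarrow> 0 \<le> t \<and> t < s" for t using fD unfolding F_def D_def by auto
    define xs where "xs = replicate (length ts) ?s1"
    have "G k = {\<omega>\<in>space M. \<forall>i<length ts. X (ts ! i) \<omega> = xs ! i}"
    proof -
      have "(\<forall>i<length ts. X (ts ! i) \<omega> = xs ! i) \<longleftrightarrow> (\<forall>t\<in>set ts. X t \<omega> = ?s1)" for \<omega>
        unfolding xs_def by (simp add: all_set_conv_all_nth)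
      moreover have "(\<forall>t\<in>set ts. X t \<omega> = ?s1) \<longleftrightarrow> (\<forall>j\<in>{..<k}. X (real_of_rat (f j)) \<omega> = ?s1)" for \<omega>
        unfolding setts F_def by simp
      ultimately show ?thesis unfolding G_def by simp
    qed
    then have "prob (G k) = (\<Prod>i<length ts. tr \<Lambda> n (ts ! i - (if i = 0 then 0 else ts ! (i - 1)))
               (if i = 0 then ?s1 else xs ! (i - 1)) (xs ! i))"
      using fdd[of ts xs] sts Fb setts by (simp add: xs_def)
    also have "\<dots> = (\<Prod>i<length ts. exp (- (ts ! i - (if i = 0 then 0 else ts ! (i - 1))) * ?q))"
      by (intro prod.cong refl) (simp add: xs_def tr_diag[OF L singletons_in] card_singletons)
    also have "\<dots> = exp (\<Sum>i<length ts. - (ts ! i - (if i = 0 then 0 else ts ! (i - 1))) * ?q)"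
      by (simp add: exp_sum)
    also have "(\<Sum>i<length ts. - (ts ! i - (if i = 0 then 0 else ts ! (i - 1))) * ?q)
        = - (if length ts = 0 then 0 else ts ! (length ts - 1)) * ?q"
    proof -
      define g where "g j = (if j = 0 then 0 else ts ! (j - 1))" for j
      have "(\<Sum>i<length ts. g (Suc i) - g i) = g (length ts) - g 0" by (rule sum_lessThan_telescope)
      moreover have "g (Suc i) - g i = ts ! i - (if i = 0 then 0 else ts ! (i - 1))" for i by (simp add: g_def)
      ultimately have tel: "(\<Sum>i<length ts. ts ! i - (if i = 0 then 0 else ts ! (i - 1))) = g (length ts)"
        by (simp add: g_def)
      have "(\<Sum>i<length ts. - (ts ! i - (if i = 0 then 0 else ts ! (i - 1))) * ?q)
          = - (\<Sum>i<length ts. ts ! i - (if i = 0 then 0 else ts ! (i - 1))) * ?q"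
        by (simp only: sum_distrib_right[symmetric] sum_negf)
      then show ?thesis unfolding tel by (simp add: g_def)
    qed
    finally have eqG: "prob (G k) = exp (- (if length ts = 0 then 0 else ts ! (length ts - 1)) * ?q)" .
    have "exp (- s * ?q) \<le> exp (- (if length ts = 0 then 0 else ts ! (length ts - 1)) * ?q)"
    proof -
      have "(if length ts = 0 then 0 else ts ! (length ts - 1)) \<le> s"
      proof (cases "length ts = 0")
        case False
        then have tin: "ts ! (length ts - 1) \<in> F" using setts nth_mem[of "length ts - 1" ts] by auto
        show ?thesis using Fb[OF tin] False by simp
      qed (use s in simp)
      then have "(if length ts = 0 then 0 else ts ! (length ts - 1)) * ?q \<le> s * ?q"
        by (rule mult_right_mono[OF _ q0])
      then show ?thesis by simp
    qed
    then show ?thesis using eqG by simp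
  qed
  have dec: "decseq G"
  proof (rule decseq_SucI)
    fix k show "G (Suc k) \<subseteq> G k" unfolding G_def by auto
  qed
  have lim: "(\<lambda>k. prob (G k)) \<longlonglongrightarrow> prob (\<Inter>k. G k)"
    using Gs dec by (intro finite_Lim_measure_decseq) auto
  have "exp (- s * ?q) \<le> prob (\<Inter>k. G k)"
    by (rule LIMSEQ_le_const[OF lim]) (use Gb in auto)
  also have "\<dots> \<le> prob {\<omega>\<in>space M. ereal s \<le> hitting_time X (n - 1) \<omega>}"
  proof (rule finite_measure_mono[OF _ hit_sets])
    show "(\<Inter>k. G k) \<subseteq> {\<omega>\<in>space M. ereal s \<le> hitting_time X (n - 1) \<omega>}"
    proof
      fix \<omega> assume w: "\<omega> \<in> (\<Inter>k. G k)"
      have "\<omega> \<in> G 0" using w by blast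
      then have ws: "\<omega> \<in> space M" unfolding G_def by simp
      have all: "X (real_of_rat (f j)) \<omega> = ?s1" for j
      proof -
        have "\<omega> \<in> G (Suc j)" using w by blast
        then show ?thesis unfolding G_def by simp
      qed
      have "ereal s \<le> hitting_time X (n - 1) \<omega>"
        unfolding hit_char[where X=X and \<omega>=\<omega>, OF rc[OF ws]]
      proof (intro allI impI)
        fix r :: rat assume "0 \<le> real_of_rat r \<and> real_of_rat r < s"
        then have "r \<in> range f" using rf by (simp add: D_def)
        then obtain j where "r = f j" by auto
        then show "n - 1 < card (X (real_of_rat r) \<omega>)" using all[of j] card_singletons n2 by simp
      qed
      then show "\<omega> \<in> {\<omega>\<in>space M. ereal s \<le> hitting_time X (n - 1) \<omega>}" using ws by simp
    qed
  qed
  finally show ?thesis .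
qed

lemma tail:
  assumes n2: "2 \<le> n" and s: "0 \<le> s"
  shows "prob {\<omega>\<in>space M. ereal s \<le> hitting_time X (n - 1) \<omega>} = exp (- s * rate \<Lambda> (singletons n))"
proof (cases "s = 0")
  case True
  have "{\<omega>\<in>space M. ereal s \<le> hitting_time X (n - 1) \<omega>} = space M"
    using True hit_nonneg[of X "n - 1"] by (auto simp: zero_ereal_def)
  then show ?thesis using True prob_space by simp
next
  case False
  then have "0 < s" using s by simp
  then show ?thesis using tail_upper[OF n2] tail_lower[OF n2] by (simp add: order_antisym)
qed

end



lemma E_bound:
  fixes N :: "'b measure" and That :: "nat \<Rightarrow> 'b \<Rightarrow> ereal" and q :: "nat \<Rightarrow> real"
  assumes P: "prob_space N" and ind: "prob_space.indep_vars N (\<lambda>_. borel) That {2..}"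
    and m1: "1 \<le> m" and h: "0 < h"
    and tl: "\<And>b s. 2 \<le> b \<Longrightarrow> 0 \<le> s \<Longrightarrow> measure N {\<omega>\<in>space N. ereal s \<le> That b \<omega>} = exp (- s * q b)"
  shows "Hd (\<lambda>d. exp (- h * q (m + d))) d K
      \<le> measure N {\<omega>\<in>space N. ereal (real K * h) \<le> (\<Sum>i\<in>{m+1..m+d}. That i \<omega>)}"
proof -
  interpret prob_space N by (rule P)
  have meas[measurable]: "\<And>i. 2 \<le> i \<Longrightarrow> That i \<in> borel_measurable N"
    using ind unfolding indep_vars_def by auto
  show ?thesis
  proof (induction d arbitrary: K)
    case 0
    show ?case
    proof (cases "K = 0")
      case True
      then have "{\<omega>\<in>space N. ereal (real K * h) \<le> (\<Sum>i\<in>{m+1..m+0}. That i \<omega>)} = space N" by auto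
      then show ?thesis using True prob_space by simp
    qed simp
  next
    case (Suc d)
    define a where "a d = exp (- h * q (m + d))" for d
    have a_eq: "a = (\<lambda>d. exp (- h * q (m + d)))" by (simp add: fun_eq_iff a_def)
    define b where "b = Suc (m + d)"
    let ?\<alpha> = "a (Suc d)"
    define T where "T = That b"
    define W where "W \<omega> = (\<Sum>i\<in>{m+1..m+d}. That i \<omega>)" for \<omega>
    have b2: "2 \<le> b" using m1 by (simp add: b_def)
    have Tm[measurable]: "T \<in> borel_measurable N" unfolding T_def using meas[OF b2] .
    have Wm[measurable]: "W \<in> borel_measurable N" unfolding W_def using m1 by (intro borel_measurable_ereal_sum meas) auto
    have sumeq: "(\<Sum>i\<in>{m+1..m + Suc d}. That i \<omega>) = W \<omega> + T \<omega>" for \<omega>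
      by (simp add: W_def T_def b_def)
    have iv: "indep_var borel T borel W"
    proof -
      have r: "indep_var (PiM {b} (\<lambda>_. borel)) (\<lambda>\<omega>. restrict (\<lambda>i. That i \<omega>) {b})
                  (PiM {m+1..m+d} (\<lambda>_. borel)) (\<lambda>\<omega>. restrict (\<lambda>i. That i \<omega>) {m+1..m+d})"
        using m1 by (intro indep_var_restrict[OF ind]) (auto simp: b_def)
      have y1: "(\<lambda>x. x b) \<in> measurable (PiM {b} (\<lambda>_. borel)) (borel :: ereal measure)" by measurable
      have y2: "(\<lambda>x. \<Sum>i\<in>{m+1..m+d}. x i) \<in> measurable (PiM {m+1..m+d} (\<lambda>_. borel)) (borel :: ereal measure)"
        by measurable
      have "indep_var borel ((\<lambda>x. x b) \<circ> (\<lambda>\<omega>. restrict (\<lambda>i. That i \<omega>) {b}))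
              borel ((\<lambda>x. \<Sum>i\<in>{m+1..m+d}. x i) \<circ> (\<lambda>\<omega>. restrict (\<lambda>i. That i \<omega>) {m+1..m+d}))"
        by (rule indep_var_compose[OF r y1 y2])
      moreover have "((\<lambda>x. x b) \<circ> (\<lambda>\<omega>. restrict (\<lambda>i. That i \<omega>) {b})) = T" by (simp add: T_def fun_eq_iff)
      moreover have "((\<lambda>x. \<Sum>i\<in>{m+1..m+d}. x i) \<circ> (\<lambda>\<omega>. restrict (\<lambda>i. That i \<omega>) {m+1..m+d})) = W"
        by (simp add: W_def fun_eq_iff)
      ultimately show ?thesis by simp
    qed
    have indp: "prob {\<omega>\<in>space N. T \<omega> \<in> A \<and> W \<omega> \<in> B} = prob {\<omega>\<in>space N. T \<omega> \<in> A} * prob {\<omega>\<in>space N. W \<omega> \<in> B}"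
      if "A \<in> sets borel" "B \<in> sets borel" for A B
    proof -
      have "prob ((\<lambda>x. (T x, W x)) -` (A \<times> B) \<inter> space N) = prob (T -` A \<inter> space N) * prob (W -` B \<inter> space N)"
        by (rule indep_varD[OF iv that])
      moreover have "(\<lambda>x. (T x, W x)) -` (A \<times> B) \<inter> space N = {\<omega>\<in>space N. T \<omega> \<in> A \<and> W \<omega> \<in> B}" by auto
      moreover have "T -` A \<inter> space N = {\<omega>\<in>space N. T \<omega> \<in> A}" "W -` B \<inter> space N = {\<omega>\<in>space N. W \<omega> \<in> B}" by auto
      ultimately show ?thesis by simp
    qed
    have tT: "prob {\<omega>\<in>space N. ereal (real k * h) \<le> T \<omega>} = ?\<alpha> ^ k" for k
    proof -
      have "prob {\<omega>\<in>space N. ereal (real k * h) \<le> T \<omega>} = exp (- (real k * h) * q b)"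
        unfolding T_def using tl[OF b2] h by simp
      also have "\<dots> = exp (real k * (- h * q b)) " by (simp add: algebra_simps)
      also have "\<dots> = ?\<alpha> ^ k" using exp_of_nat_mult[of k "- h * q b"] by (simp add: a_def b_def)
      finally show ?thesis .
    qed
    have iT: "prob {\<omega>\<in>space N. T \<omega> \<in> {ereal (real k * h)..<ereal (real (Suc k) * h)}} = ?\<alpha> ^ k - ?\<alpha> ^ Suc k" for k
    proof -
      have "{\<omega>\<in>space N. T \<omega> \<in> {ereal (real k * h)..<ereal (real (Suc k) * h)}}
          = {\<omega>\<in>space N. ereal (real k * h) \<le> T \<omega>} - {\<omega>\<in>space N. ereal (real (Suc k) * h) \<le> T \<omega>}" by auto
      moreover have "{\<omega>\<in>space N. ereal (real (Suc k) * h) \<le> T \<omega>} \<subseteq> {\<omega>\<in>space N. ereal (real k * h) \<le> T \<omega>}"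
        using h by (auto elim: order_trans[rotated] simp: mult_right_mono)
      moreover have "prob ({\<omega>\<in>space N. ereal (real k * h) \<le> T \<omega>} - {\<omega>\<in>space N. ereal (real (Suc k) * h) \<le> T \<omega>})
          = prob {\<omega>\<in>space N. ereal (real k * h) \<le> T \<omega>} - prob {\<omega>\<in>space N. ereal (real (Suc k) * h) \<le> T \<omega>}"
        by (rule finite_measure_Diff) (auto intro: order_trans[rotated] simp: mult_right_mono h less_imp_le)
      ultimately show ?thesis using tT[of k] tT[of "Suc k"] by simp
    qed
    have pw: "?\<alpha> ^ Suc k \<le> ?\<alpha> ^ k" for k
    proof -
      have "exp (- 1 * q b) \<le> 1" using tl[OF b2, of 1] prob_le_1[of "{\<omega>\<in>space N. ereal 1 \<le> That b \<omega>}"] by simp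
      then have "0 \<le> q b" by simp
      then have a1: "?\<alpha> \<le> 1" using h by (simp add: a_def b_def)
      have "?\<alpha> * ?\<alpha> ^ k \<le> 1 * ?\<alpha> ^ k" by (rule mult_right_mono[OF a1]) (simp add: a_def)
      then show ?thesis by simp
    qed
    define E where "E k = {\<omega>\<in>space N. T \<omega> \<in> {ereal (real k * h)..<ereal (real (Suc k) * h)} \<and> W \<omega> \<in> {ereal (real (K - k) * h)..}}" for k
    define E' where "E' = {\<omega>\<in>space N. T \<omega> \<in> {ereal (real K * h)..} \<and> W \<omega> \<in> {ereal (real 0 * h)..}}"
    have Es: "E k \<in> sets N" for k unfolding E_def by measurable
    have E's: "E' \<in> sets N" unfolding E'_def by measurable
    have sub: "(\<Union>k\<in>{..<K}. E k) \<union> E' \<subseteq> {\<omega>\<in>space N. ereal (real K * h) \<le> (\<Sum>i\<in>{m+1..m + Suc d}. That i \<omega>)}"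
    proof safe
      fix \<omega> k assume "k < K" "\<omega> \<in> E k"
      then have "ereal (real (K - k) * h) \<le> W \<omega>" "ereal (real k * h) \<le> T \<omega>" "\<omega> \<in> space N" by (auto simp: E_def)
      then have "ereal (real (K - k) * h) + ereal (real k * h) \<le> W \<omega> + T \<omega>" by (intro add_mono)
      moreover have "real (K - k) * h + real k * h = real K * h" using \<open>k < K\<close> by (simp add: of_nat_diff algebra_simps)
      ultimately have "ereal (real K * h) \<le> W \<omega> + T \<omega>" by simp
      then show "\<omega> \<in> space N" "ereal (real K * h) \<le> (\<Sum>i\<in>{m+1..m + Suc d}. That i \<omega>)"
        using \<open>\<omega> \<in> space N\<close> by (simp_all only: sumeq)
    next
      fix \<omega> assume "\<omega> \<in> E'"
      then have "0 \<le> W \<omega>" "ereal (real K * h) \<le> T \<omega>" "\<omega> \<in> space N" by (auto simp: E'_def zero_ereal_def)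
      then have "0 + ereal (real K * h) \<le> W \<omega> + T \<omega>" by (intro add_mono)
      then have "ereal (real K * h) \<le> W \<omega> + T \<omega>" by simp
      then show "\<omega> \<in> space N" "ereal (real K * h) \<le> (\<Sum>i\<in>{m+1..m + Suc d}. That i \<omega>)"
        using \<open>\<omega> \<in> space N\<close> by (simp_all only: sumeq)
    qed
    have disj: "disjoint_family_on E {..<K}"
      unfolding disjoint_family_on_def
    proof (intro ballI impI)
      fix i j assume "i \<in> {..<K}" "j \<in> {..<K}" "i \<noteq> j"
      show "E i \<inter> E j = {}"
      proof (rule ccontr)
        assume "E i \<inter> E j \<noteq> {}"
        then obtain \<omega> where "\<omega> \<in> E i" "\<omega> \<in> E j" by auto
        then have a: "ereal (real i * h) \<le> T \<omega>" "T \<omega> < ereal (real (Suc j) * h)"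
          "ereal (real j * h) \<le> T \<omega>" "T \<omega> < ereal (real (Suc i) * h)"
          unfolding E_def by auto
        then have "ereal (real i * h) < ereal (real (Suc j) * h)" "ereal (real j * h) < ereal (real (Suc i) * h)"
          by (metis le_less_trans)+
        then have "real i < real (Suc j)" "real j < real (Suc i)" using h by auto
        then show False using \<open>i \<noteq> j\<close> by linarith
      qed
    qed
    have disj2: "(\<Union>k\<in>{..<K}. E k) \<inter> E' = {}"
    proof safe
      fix \<omega> k assume "k < K" "\<omega> \<in> E k" "\<omega> \<in> E'"
      then have "ereal (real K * h) \<le> T \<omega>" "T \<omega> < ereal (real (Suc k) * h)" unfolding E_def E'_def by auto
      then have "ereal (real K * h) < ereal (real (Suc k) * h)" by (metis le_less_trans)
      then have "real K < real (Suc k)" using h by auto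
      then show "\<omega> \<in> {}" using \<open>k < K\<close> by linarith
    qed
    have pE: "(?\<alpha> ^ k - ?\<alpha> ^ Suc k) * Hd a d (K - k) \<le> prob (E k)" for k
    proof -
      have "prob (E k) = prob {\<omega>\<in>space N. T \<omega> \<in> {ereal (real k * h)..<ereal (real (Suc k) * h)}} * prob {\<omega>\<in>space N. W \<omega> \<in> {ereal (real (K - k) * h)..}}"
        unfolding E_def by (rule indp) auto
      then have "prob (E k) = (?\<alpha> ^ k - ?\<alpha> ^ Suc k) * prob {\<omega>\<in>space N. W \<omega> \<in> {ereal (real (K - k) * h)..}}"
        by (simp only: iT)
      moreover have "Hd a d (K - k) \<le> prob {\<omega>\<in>space N. W \<omega> \<in> {ereal (real (K - k) * h)..}}"
        using Suc.IH[of "K - k"] by (simp add: W_def a_eq)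
      ultimately show ?thesis using pw[of k] by (simp add: mult_left_mono)
    qed
    have pE': "?\<alpha> ^ K \<le> prob E'"
    proof -
      have "prob E' = prob {\<omega>\<in>space N. T \<omega> \<in> {ereal (real K * h)..}} * prob {\<omega>\<in>space N. W \<omega> \<in> {ereal (real 0 * h)..}}"
        unfolding E'_def by (rule indp) auto
      moreover have "{\<omega>\<in>space N. T \<omega> \<in> {ereal (real K * h)..}} = {\<omega>\<in>space N. ereal (real K * h) \<le> T \<omega>}" by auto
      ultimately have "prob E' = ?\<alpha> ^ K * prob {\<omega>\<in>space N. W \<omega> \<in> {ereal (real 0 * h)..}}"
        using tT[of K] by simp
      moreover have "1 \<le> prob {\<omega>\<in>space N. W \<omega> \<in> {ereal (real 0 * h)..}}"
        using Suc.IH[of 0] by (simp add: W_def Hd_zero)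
      moreover have "0 \<le> ?\<alpha> ^ K" by (simp add: a_def)
      ultimately show ?thesis using mult_left_mono[of 1 "prob {\<omega>\<in>space N. W \<omega> \<in> {ereal (real 0 * h)..}}" "?\<alpha> ^ K"] by simp
    qed
    have "Hd a (Suc d) K = (\<Sum>k<K. (?\<alpha> ^ k - ?\<alpha> ^ Suc k) * Hd a d (K - k)) + ?\<alpha> ^ K"
      by (simp add: Hd.simps(2))
    also have "\<dots> \<le> (\<Sum>k<K. prob (E k)) + prob E'"
      using pE pE' by (intro add_mono sum_mono) auto
    also have "\<dots> = prob ((\<Union>k\<in>{..<K}. E k) \<union> E')"
    proof -
      have UE: "(\<Union>k\<in>{..<K}. E k) \<in> sets N" using Es by (intro sets.finite_UN) auto
      have u1: "prob ((\<Union>k\<in>{..<K}. E k) \<union> E') = prob (\<Union>k\<in>{..<K}. E k) + prob E'"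
        by (rule finite_measure_Union[OF UE E's disj2])
      have u2: "prob (\<Union>k\<in>{..<K}. E k) = (\<Sum>k<K. prob (E k))"
        by (rule finite_measure_finite_Union) (use Es disj in auto)
      show ?thesis using u1 u2 by simp
    qed
    also have "\<dots> \<le> prob {\<omega>\<in>space N. ereal (real K * h) \<le> (\<Sum>i\<in>{m+1..m + Suc d}. That i \<omega>)}"
    proof -
      have Sm[measurable]: "(\<lambda>\<omega>. \<Sum>i\<in>{m+1..m + Suc d}. That i \<omega>) \<in> borel_measurable N"
        using m1 by (intro borel_measurable_ereal_sum meas) auto
      show ?thesis using sub by (intro finite_measure_mono) measurable
    qed
    finally show ?case unfolding a_eq .
  qed
qed



lemma x_mono: "0 \<le> t \<Longrightarrow> t * (1 - inverse (real (Suc (Suc k))))^2 \<le> t * (1 - inverse (real (Suc (Suc (Suc k)))))^2"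
proof -
  assume t: "0 \<le> t"
  have i: "inverse (real (Suc (Suc (Suc k)))) \<le> inverse (real (Suc (Suc k)))"
    by (rule le_imp_inverse_le) auto
  have p: "0 \<le> 1 - inverse (real (Suc (Suc k)))" by (simp add: field_simps)
  have "(1 - inverse (real (Suc (Suc k))))^2 \<le> (1 - inverse (real (Suc (Suc (Suc k)))))^2"
    using i p by (intro power_mono) auto
  then show ?thesis using t by (rule mult_left_mono)
qed

theorem lemma5p8:
  fixes \<Lambda> :: "real measure"
    and n m :: nat and t :: real
    and M :: "'a measure" and X :: "real \<Rightarrow> 'a \<Rightarrow> nat set set"
    and N :: "'b measure" and That :: "nat \<Rightarrow> 'b \<Rightarrow> ereal"
    and M' :: "nat \<Rightarrow> 'c measure" and X' :: "nat \<Rightarrow> real \<Rightarrow> 'c \<Rightarrow> nat set set"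
  assumes "lambda_measure \<Lambda>"
    and "1 \<le> m" and "m < n" and "0 < t"
    and "prob_space M" and "is_coalescent \<Lambda> n M X"
    and "prob_space N"
    and "prob_space.indep_vars N (\<lambda>_. borel) That {2..}"
    and "\<And>i. 2 \<le> i \<Longrightarrow> prob_space (M' i) \<and> is_coalescent \<Lambda> i (M' i) (X' i)
            \<and> distr N borel (That i) = distr (M' i) borel (hitting_time (X' i) (i - 1))"
  shows "measure M {\<omega>\<in>space M. ereal t \<le> hitting_time X m \<omega>}
         \<le> measure N {\<omega>\<in>space N. ereal t \<le> (\<Sum>i=m+1..n. That i \<omega>)}"
proof -
  note L = assms(1) and m1 = assms(2) and mn = assms(3) and t0 = assms(4)
  interpret pM: prob_space M by (rule assms(5))
  interpret pN: prob_space N by (rule assms(7))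
  interpret cM: coal \<Lambda> n M X using assms(1,5,6) by (simp add: coal_def)
  have ind: "pN.indep_vars (\<lambda>_. borel) That {2..}" using assms(8) .
  have Tm: "\<And>i. 2 \<le> i \<Longrightarrow> That i \<in> borel_measurable N"
    using ind unfolding pN.indep_vars_def by auto
  define q where "q b = rate \<Lambda> (singletons b)" for b
  have tl: "measure N {\<omega>\<in>space N. ereal s \<le> That b \<omega>} = exp (- s * q b)" if b2: "2 \<le> b" and s: "0 \<le> s" for b s
  proof -
    have hb: "prob_space (M' b)" "is_coalescent \<Lambda> b (M' b) (X' b)"
      and dd: "distr N borel (That b) = distr (M' b) borel (hitting_time (X' b) (b - 1))"
      using assms(9)[OF b2] by auto
    interpret cb: coal \<Lambda> b "M' b" "X' b" using L hb by (simp add: coal_def)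
    have "measure N {\<omega>\<in>space N. ereal s \<le> That b \<omega>} = measure N (That b -` {ereal s..} \<inter> space N)"
      by (intro arg_cong[where f="measure N"]) auto
    also have "\<dots> = measure (distr N borel (That b)) {ereal s..}"
      by (rule measure_distr[symmetric]) (use Tm[OF b2] in auto)
    also have "\<dots> = measure (distr (M' b) borel (hitting_time (X' b) (b - 1))) {ereal s..}" using dd by simp
    also have "\<dots> = measure (M' b) (hitting_time (X' b) (b - 1) -` {ereal s..} \<inter> space (M' b))"
      by (rule measure_distr) (use cb.hit_meas in auto)
    also have "\<dots> = measure (M' b) {\<omega>\<in>space (M' b). ereal s \<le> hitting_time (X' b) (b - 1) \<omega>}"
      by (intro arg_cong[where f="measure (M' b)"]) auto
    also have "\<dots> = exp (- s * q b)" unfolding q_def by (rule cb.tail[OF b2 s])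
    finally show ?thesis .
  qed
  define d where "d = n - m"
  have d0: "0 < d" using mn by (simp add: d_def)
  have md: "m + d = n" using mn by (simp add: d_def)
  define Y where "Y \<omega> = (\<Sum>i=m+1..n. That i \<omega>)" for \<omega>
  define x where "x k = t * (1 - inverse (real (Suc (Suc k))))^2" for k
  define B where "B k = {\<omega>\<in>space N. ereal (x k) \<le> Y \<omega>}" for k
  have Ym[measurable]: "Y \<in> borel_measurable N"
    unfolding Y_def using m1 by (intro borel_measurable_ereal_sum Tm) auto
  have step: "measure M {\<omega>\<in>space M. ereal t \<le> hitting_time X m \<omega>} \<le> measure N (B k)" for k
  proof -
    define Nk where "Nk = d * Suc (Suc k)"
    define s where "s = t * (1 - inverse (real (Suc (Suc k))))"
    define h where "h = s / real Nk"
    have Nk0: "0 < Nk" using d0 by (simp add: Nk_def)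
    have "0 < 1 - inverse (real (Suc (Suc k)))" by (simp add: field_simps)
    then have s0: "0 < s" using t0 by (simp add: s_def)
    have st: "s < t" using t0 by (simp add: s_def)
    have h0: "0 < h" using s0 Nk0 by (simp add: h_def)
    have Nh: "real Nk * h = s" using Nk0 by (simp add: h_def)
    have xk: "real (Nk - d) * h = x k"
    proof -
      define r where "r = real (Suc (Suc k))"
      have r0: "0 < r" by (simp add: r_def)
      have dr0: "0 < real d" using d0 by simp
      have e1: "real (Nk - d) = real d * (r - 1)"
      proof -
        have "Nk - d = d * Suc k" by (simp add: Nk_def)
        then show ?thesis by (simp add: r_def algebra_simps)
      qed
      have e2: "h = s / (real d * r)" by (simp add: h_def Nk_def r_def algebra_simps)
      have "real (Nk - d) * h = (1 - inverse r) * s"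
        unfolding e1 e2 using r0 dr0 by (simp add: field_simps)
      also have "\<dots> = x k" by (simp add: s_def x_def r_def power2_eq_square)
      finally show ?thesis .
    qed
    have "{\<omega>\<in>space M. ereal t \<le> hitting_time X m \<omega>} \<subseteq> {\<omega>\<in>space M. m < card (X s \<omega>)}"
    proof
      fix \<omega> assume w: "\<omega> \<in> {\<omega>\<in>space M. ereal t \<le> hitting_time X m \<omega>}"
      then have a: "ereal t \<le> hitting_time X m \<omega>" by simp
      have "m < card (X s \<omega>)"
      proof (rule ccontr)
        assume "\<not> m < card (X s \<omega>)"
        then have "hitting_time X m \<omega> \<le> ereal s" using s0 by (intro hit_le) auto
        from order_trans[OF a this] st show False by simp
      qed
      then show "\<omega> \<in> {\<omega>\<in>space M. m < card (X s \<omega>)}" using w by simp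
    qed
    then have "measure M {\<omega>\<in>space M. ereal t \<le> hitting_time X m \<omega>} \<le> measure M {\<omega>\<in>space M. m < card (X s \<omega>)}"
      by (intro pM.finite_measure_mono cM.ev_card)
    also have "\<dots> \<le> Hd (\<lambda>d. exp (- h * rate \<Lambda> (singletons (m + d)))) (n - m) (Nk - (n - m))"
      using cM.M_bound[OF h0 mn, of Nk] Nh by simp
    also have "\<dots> \<le> measure N {\<omega>\<in>space N. ereal (real (Nk - d) * h) \<le> (\<Sum>i\<in>{m+1..m+d}. That i \<omega>)}"
      using E_bound[OF assms(7) ind m1 h0, of q d "Nk - d"] tl by (simp add: q_def d_def)
    also have "\<dots> = measure N (B k)" unfolding B_def Y_def xk md by simp
    finally show ?thesis .
  qed
  have Bs: "B k \<in> sets N" for k unfolding B_def by measurable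
  have dec: "decseq B"
  proof (rule decseq_SucI)
    fix k
    have "x k \<le> x (Suc k)" unfolding x_def using x_mono t0 by simp
    then show "B (Suc k) \<subseteq> B k" unfolding B_def by (auto elim: order_trans[rotated])
  qed
  have xlim: "x \<longlonglongrightarrow> t"
  proof -
    have "(\<lambda>k. inverse (real (Suc (Suc k)))) \<longlonglongrightarrow> 0"
      using LIMSEQ_Suc[OF LIMSEQ_inverse_real_of_nat] .
    then have "(\<lambda>k. t * (1 - inverse (real (Suc (Suc k))))^2) \<longlonglongrightarrow> t * (1 - 0)^2"
      by (intro tendsto_intros)
    moreover have "x = (\<lambda>k. t * (1 - inverse (real (Suc (Suc k))))^2)" by (simp add: fun_eq_iff x_def)
    ultimately show ?thesis by simp
  qed
  have inter: "(\<Inter>k. B k) = {\<omega>\<in>space N. ereal t \<le> Y \<omega>}"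
  proof
    show "(\<Inter>k. B k) \<subseteq> {\<omega>\<in>space N. ereal t \<le> Y \<omega>}"
    proof
      fix \<omega> assume w: "\<omega> \<in> (\<Inter>k. B k)"
      have "\<omega> \<in> B 0" using w by blast
      then have ws: "\<omega> \<in> space N" by (simp add: B_def)
      have "ereal t \<le> Y \<omega>"
      proof (rule LIMSEQ_le_const2)
        show "(\<lambda>k. ereal (x k)) \<longlonglongrightarrow> ereal t" using xlim by (rule tendsto_ereal)
        have "\<And>k. \<omega> \<in> B k" using w by blast
        then show "\<exists>N. \<forall>n\<ge>N. ereal (x n) \<le> Y \<omega>" by (auto simp: B_def)
      qed
      then show "\<omega> \<in> {\<omega>\<in>space N. ereal t \<le> Y \<omega>}" using ws by simp
    qed
  next
    show "{\<omega>\<in>space N. ereal t \<le> Y \<omega>} \<subseteq> (\<Inter>k. B k)"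
    proof
      fix \<omega> assume w: "\<omega> \<in> {\<omega>\<in>space N. ereal t \<le> Y \<omega>}"
      have "x k \<le> t" for k
      proof -
        have "(1 - inverse (real (Suc (Suc k))))^2 \<le> 1"
          by (rule power_le_one) (auto simp: field_simps)
        then show ?thesis unfolding x_def using t0 by (simp add: mult_left_le)
      qed
      then show "\<omega> \<in> (\<Inter>k. B k)" using w unfolding B_def by (auto elim: order_trans[rotated])
    qed
  qed
  have lim: "(\<lambda>k. measure N (B k)) \<longlonglongrightarrow> measure N {\<omega>\<in>space N. ereal t \<le> Y \<omega>}"
    unfolding inter[symmetric] using Bs dec by (intro pN.finite_Lim_measure_decseq) auto
  have "measure M {\<omega>\<in>space M. ereal t \<le> hitting_time X m \<omega>} \<le> measure N {\<omega>\<in>space N. ereal t \<le> Y \<omega>}"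
    by (rule LIMSEQ_le_const[OF lim]) (use step in auto)
  then show ?thesis unfolding Y_def .
qed



end
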